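(* Let $x>0$, $y>0$, $c\ge 1$, $d\ge 1$ be real numbers and let \begin{align*} f(c,d,x,y)=\;&(14-6\sqrt{5})(c^2xy^3+d^2x^3y+cdx^3y+cdxy^3+cx^3y+dxy^3)+(32-12\sqrt{5})(c^2x^2y^2+d^2x^2y^2)\\ &+(12\sqrt{5}-48)(c^2xy^2+d^2x^2y)+(12\sqrt{5}-24)(c^2x^2y+d^2xy^2)+(20\sqrt{5}-44)(cx^2y^3+dx^3y^2)\\ &+(28-12\sqrt{5})(cxy^3+dx^3y)+(10\sqrt{5}-22)(cx^3y^2+dx^2y^3)+(48-24\sqrt{5})(cx^2y^2+dx^2y^2)\\ &+(4+4\sqrt{5})(cxy^2+dx^2y)+(6\sqrt{5}-6)(c^3dx+cd^3y)+(6+2\sqrt{5})(c^3dy^2+cd^3x^2)\\ &+(2\sqrt{5}-26)(c^3dy+cd^3x)+(8\sqrt{5}-4)(c^3xy^2+d^3x^2y)+(18-6\sqrt{5})(c^3xy+d^3xy)\\ &+(6\sqrt{5}-30)(c^2d^2x+c^2d^2y)+(18-6\sqrt{5})(c^2dx^2+cd^2y^2)+(18-14\sqrt{5})(c^2dy^2+cd^2x^2)\\ &+(8+4\sqrt{5})(c^2dy+cd^2x)+(4\sqrt{5}-8)(cdx^3+cdy^3)+(4\sqrt{5}-8)(c^2y^3+d^2x^3)\\ &+(6+2\sqrt{5})(c^2y^2+d^2x^2)+(10\sqrt{5}-22)(x^3y^2+x^2y^3)+(6+2\sqrt{5})(c^4y^2+d^4x^2)\\ &+(2\sqrt{5}-2)(c^4y+d^4x)+(8\sqrt{5}-16)(c^2dx^2y+cd^2xy^2)+(14\sqrt{5}-22)(c^2dxy^2+cd^2x^2y)\\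 &+(36-36\sqrt{5})(c^2dxy+cd^2xy)+(6-2\sqrt{5})(c^3dxy+cd^3xy)+(28\sqrt{5}-80)(cdx^2y+cdxy^2)\\ &+12(c^3d^2+c^2d^3)+4(c^4d+cd^4)-8\sqrt{5}(c^3y^2+d^3x^2)+4x^2y^2+(18+6\sqrt{5})cdxy\\ &+(12-4\sqrt{5})c^2d^2xy+(36-16\sqrt{5})x^3y^3+(70-30\sqrt{5})cdx^2y^2. \end{align*} Then $f(c,d,x,y)\ge 0$, with equality if and only if $c=d=x=y=1$. *)

theory Defs
  imports Complex_Main
begin

definition f4 :: "real \<Rightarrow> real \<Rightarrow> real \<Rightarrow> real \<Rightarrow> real" where
"f4 c d x y = (let s = sqrt 5 in
   (14 - 6*s)*(c^2*x*y^3 + d^2*x^3*y + c*d*x^3*y + c*d*x*y^3 + c*x^3*y + d*x*y^3)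
 + (32 - 12*s)*(c^2*x^2*y^2 + d^2*x^2*y^2)
 + (12*s - 48)*(c^2*x*y^2 + d^2*x^2*y)
 + (12*s - 24)*(c^2*x^2*y + d^2*x*y^2)
 + (20*s - 44)*(c*x^2*y^3 + d*x^3*y^2)
 + (28 - 12*s)*(c*x*y^3 + d*x^3*y)
 + (10*s - 22)*(c*x^3*y^2 + d*x^2*y^3)
 + (48 - 24*s)*(c*x^2*y^2 + d*x^2*y^2)
 + (4 + 4*s)*(c*x*y^2 + d*x^2*y)
 + (6*s - 6)*(c^3*d*x + c*d^3*y)
 + (6 + 2*s)*(c^3*d*y^2 + c*d^3*x^2)
 + (2*s - 26)*(c^3*d*y + c*d^3*x)
 + (8*s - 4)*(c^3*x*y^2 + d^3*x^2*y)
 + (18 - 6*s)*(c^3*x*y + d^3*x*y)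
 + (6*s - 30)*(c^2*d^2*x + c^2*d^2*y)
 + (18 - 6*s)*(c^2*d*x^2 + c*d^2*y^2)
 + (18 - 14*s)*(c^2*d*y^2 + c*d^2*x^2)
 + (8 + 4*s)*(c^2*d*y + c*d^2*x)
 + (4*s - 8)*(c*d*x^3 + c*d*y^3)
 + (4*s - 8)*(c^2*y^3 + d^2*x^3)
 + (6 + 2*s)*(c^2*y^2 + d^2*x^2)
 + (10*s - 22)*(x^3*y^2 + x^2*y^3)
 + (6 + 2*s)*(c^4*y^2 + d^4*x^2)
 + (2*s - 2)*(c^4*y + d^4*x)
 + (8*s - 16)*(c^2*d*x^2*y + c*d^2*x*y^2)
 + (14*s - 22)*(c^2*d*x*y^2 + c*d^2*x^2*y)
 + (36 - 36*s)*(c^2*d*x*y + c*d^2*x*y)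
 + (6 - 2*s)*(c^3*d*x*y + c*d^3*x*y)
 + (28*s - 80)*(c*d*x^2*y + c*d*x*y^2)
 + 12*(c^3*d^2 + c^2*d^3) + 4*(c^4*d + c*d^4) - 8*s*(c^3*y^2 + d^3*x^2) + 4*x^2*y^2
 + (18 + 6*s)*c*d*x*y
 + (12 - 4*s)*c^2*d^2*x*y + (36 - 16*s)*x^3*y^3 + (70 - 30*s)*c*d*x^2*y^2)"

end

theory Submission
  imports Defs
begin

definition FA :: "real \<Rightarrow> real \<Rightarrow> real \<Rightarrow> real \<Rightarrow> real" where
  "FA c d x y = (4) * x^2*y^2 + (-22) * x^2*y^3 + (-22) * x^3*y^2 + (36) * x^3*y^3 + (14) * d*x*y^3 + (4) * d*x^2*y + (48) * d*x^2*y^2 + (-22) * d*x^2*y^3 + (28) * d*x^3*y + (-44) * d*x^3*y^2 + (-24) * d^2*x*y^2 + (6) * d^2*x^2 + (-48) * d^2*x^2*y + (32) * d^2*x^2*y^2 + (-8) * d^2*x^3 + (14) * d^2*x^3*y + (18) * d^3*x*y + (-4) * d^3*x^2*y + (-2) * d^4*x + (6) * d^4*x^2 + (4) * c*x*y^2 + (28) * c*x*y^3 + (48) * c*x^2*y^2 + (-44) * c*x^2*y^3 + (14) * c*x^3*y + (-22) * c*x^3*y^2 + (-8) * c*d*y^3 + (18) * c*d*x*y + (-80) * c*d*x*y^2 + (14) * c*d*x*y^3 + (-80) * c*d*x^2*y + (70) * c*d*x^2*y^2 + (-8) * c*d*x^3 + (14) * c*d*x^3*y + (18) * c*d^2*y^2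 + (8) * c*d^2*x + (36) * c*d^2*x*y + (-16) * c*d^2*x*y^2 + (18) * c*d^2*x^2 + (-22) * c*d^2*x^2*y + (-6) * c*d^3*y + (-26) * c*d^3*x + (6) * c*d^3*x*y + (6) * c*d^3*x^2 + (4) * c*d^4 + (6) * c^2*y^2 + (-8) * c^2*y^3 + (-48) * c^2*x*y^2 + (14) * c^2*x*y^3 + (-24) * c^2*x^2*y + (32) * c^2*x^2*y^2 + (8) * c^2*d*y + (18) * c^2*d*y^2 + (36) * c^2*d*x*y + (-22) * c^2*d*x*y^2 + (18) * c^2*d*x^2 + (-16) * c^2*d*x^2*y + (-30) * c^2*d^2*y + (-30) * c^2*d^2*x + (12) * c^2*d^2*x*y + (12) * c^2*d^3 + (18) * c^3*x*y + (-4) * c^3*x*y^2 + (-26) * c^3*d*y + (6) * c^3*d*y^2 + (-6) * c^3*d*x + (6) * c^3*d*x*y + (12) * c^3*d^2 + (-2) * c^4*y + (6) * c^4*y^2 + (4) * c^4*d"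

definition FB :: "real \<Rightarrow> real \<Rightarrow> real \<Rightarrow> real \<Rightarrow> real" where
  "FB c d x y = (10) * x^2*y^3 + (10) * x^3*y^2 + (-16) * x^3*y^3 + (-6) * d*x*y^3 + (4) * d*x^2*y + (-24) * d*x^2*y^2 + (10) * d*x^2*y^3 + (-12) * d*x^3*y + (20) * d*x^3*y^2 + (12) * d^2*x*y^2 + (2) * d^2*x^2 + (12) * d^2*x^2*y + (-12) * d^2*x^2*y^2 + (4) * d^2*x^3 + (-6) * d^2*x^3*y + (-6) * d^3*x*y + (-8) * d^3*x^2 + (8) * d^3*x^2*y + (2) * d^4*x + (2) * d^4*x^2 + (4) * c*x*y^2 + (-12) * c*x*y^3 + (-24) * c*x^2*y^2 + (20) * c*x^2*y^3 + (-6) * c*x^3*y + (10) * c*x^3*y^2 + (4) * c*d*y^3 + (6) * c*d*x*y + (28) * c*d*x*y^2 + (-6) * c*d*x*y^3 + (28) * c*d*x^2*y + (-30) * c*d*x^2*y^2 + (4) * c*d*x^3 + (-6) * c*d*x^3*y + (-6) * c*d^2*y^2 + (4) * c*d^2*x + (-36) * c*d^2*x*y + (8) * c*d^2*x*y^2 + (-14) * c*d^2*x^2 + (14) * c*d^2*x^2*y + (6) * c*d^3*y + (2) * c*d^3*x + (-2) * c*d^3*x*y + (2) * c*d^3*x^2 + (2) * c^2*y^2 + (4) * c^2*y^3 + (12) * c^2*x*y^2 + (-6) * c^2*x*y^3 + (12) * c^2*x^2*y + (-12) * c^2*x^2*y^2 + (4) * c^2*d*y + (-14) * c^2*d*y^2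 + (-36) * c^2*d*x*y + (14) * c^2*d*x*y^2 + (-6) * c^2*d*x^2 + (8) * c^2*d*x^2*y + (6) * c^2*d^2*y + (6) * c^2*d^2*x + (-4) * c^2*d^2*x*y + (-8) * c^3*y^2 + (-6) * c^3*x*y + (8) * c^3*x*y^2 + (2) * c^3*d*y + (2) * c^3*d*y^2 + (6) * c^3*d*x + (-2) * c^3*d*x*y + (2) * c^4*y + (2) * c^4*y^2"

lemma f4_split: "f4 c d x y = FA c d x y + sqrt 5 * FB c d x y"
  unfolding f4_def FA_def FB_def Let_def by algebra

definition QL0 :: "real \<Rightarrow> real \<Rightarrow> real \<Rightarrow> real \<Rightarrow> real \<Rightarrow> real \<Rightarrow> real \<Rightarrow> real \<Rightarrow> real \<Rightarrow> real \<Rightarrow> real \<Rightarrow> real \<Rightarrow> real \<Rightarrow> real \<Rightarrow> real \<Rightarrow> real \<Rightarrow> real" where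
  "QL0 z0 z1 z2 z3 z4 z5 z6 z7 z8 z9 z10 z11 z12 z13 z14 z15 = 82456920 * z0^2 + 82456920 * z1^2 + 17788680 * z2^2 + 163636200 * z3^2 + 13071240 * z4^2 + 112510944 * z5^2 + 25749360 * z6^2 + 23194080 * z7^2 + 51400440 * z8^2 + 163636200 * z9^2 + 112510944 * z10^2 + 13071240 * z11^2 + 25749360 * z12^2 + 83968920 * z13^2 + 23194080 * z14^2 + 51400440 * z15^2 + 90319320 * z0 * z1 + 60343920 * z0 * z2 - (201670560) * z0 * z3 + 45929520 * z0 * z4 + 18501210 * z0 * z5 + 17788680 * z0 * z6 - (45798480) * z0 * z7 - (19819800) * z0 * z8 - (80196480) * z0 * z9 + 150892560 * z0 * z10 + 34226010 * z0 * z11 + 36036000 * z0 * z12 - (136039176) * z0 * z13 + 9893520 * z0 * z14 + 76619088 * z0 * z15 + 60343920 * z1 * z2 - (80196480) * z1 * z3 + 34226010 * z1 * z4 + 150892560 * z1 * z5 + 36036000 * z1 * z6 + 9893520 * z1 * z7 + 76619088 * z1 * z8 - (201670560) * z1 * z9 + 18501210 * z1 * z10 + 45929520 * z1 * z11 + 17788680 * z1 * z12 - (136039176) * z1 * z13 - (45798480) * z1 * z14 - (19819800) * z1 * z15 - (67002390) * z2 * z3 + 20737080 * z2 * z4 + 42915600 * z2 * z5 + 14938560 * z2 * z6 - (7043400) * z2 * z7 + 16085160 * z2 * z8 - (67002390) * z2 * z9 + 42915600 * z2 * z10 + 20737080 * z2 * z11 + 14938560 * z2 * z12 - (63972090) *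 z2 * z13 - (7043400) * z2 * z14 + 16085160 * z2 * z15 - (40884480) * z3 * z4 + 56085120 * z3 * z5 + 1801800 * z3 * z6 + 98411040 * z3 * z7 + 85438080 * z3 * z8 + 50319360 * z3 * z9 - (221542776) * z3 * z10 - (31862376) * z3 * z11 - (33505290) * z3 * z12 + 172551600 * z3 * z13 - (26956800) * z3 * z14 - (120742440) * z3 * z15 + 27354600 * z4 * z5 + 17100720 * z4 * z6 - (1572480) * z4 * z7 + 11400480 * z4 * z8 - (31862376) * z4 * z9 + 42850080 * z4 * z10 + 14651910 * z4 * z11 + 15233400 * z4 * z12 - (37407240) * z4 * z13 + 3090360 * z4 * z14 + 21874320 * z4 * z15 + 54414360 * z5 * z6 + 61850880 * z5 * z7 + 139885200 * z5 * z8 - (221542776) * z5 * z9 - (75765690) * z5 * z10 + 42850080 * z5 * z11 + 7371000 * z5 * z12 - (82413240) * z5 * z13 - (66891240) * z5 * z14 - (76607440) * z5 * z15 + 14348880 * z6 * z7 + 31646160 * z6 * z8 - (33505290) * z6 * z9 + 7371000 * z6 * z10 + 15233400 * z6 * z11 + 11466000 * z6 * z12 - (18622240) * z6 * z13 - (1914640) * z6 * z14 + 4226040 * z6 * z15 + 54938520 * z7 * z8 - (26956800) * z7 * z9 - (66891240) * z7 * z10 + 3090360 * z7 * z11 - (1914640) * z7 * z12 + 30607200 * z7 * z13 - (16828560) * z7 * z14 - (42299712) * z7 * z15 - (120742440) * z8 * z9 - (76607440) * z8 * z10 + 21874320 * z8 * z11 + 4226040 * z8 * z12 - (20417670) * z8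 * z13 - (42299712) * z8 * z14 - (61965540) * z8 * z15 + 56085120 * z9 * z10 - (40884480) * z9 * z11 + 1801800 * z9 * z12 + 172551600 * z9 * z13 + 98411040 * z9 * z14 + 85438080 * z9 * z15 + 27354600 * z10 * z11 + 54414360 * z10 * z12 - (82413240) * z10 * z13 + 61850880 * z10 * z14 + 139885200 * z10 * z15 + 17100720 * z11 * z12 - (37407240) * z11 * z13 - (1572480) * z11 * z14 + 11400480 * z11 * z15 - (18622240) * z12 * z13 + 14348880 * z12 * z14 + 31646160 * z12 * z15 + 30607200 * z13 * z14 - (20417670) * z13 * z15 + 54938520 * z14 * z15"

lemma QL0_sos: "100000000 * QL0 z0 z1 z2 z3 z4 z5 z6 z7 z8 z9 z10 z11 z12 z13 z14 z15 = 8143285867 * (1000 * z0 + 555 * z1 + 371 * z2 + (-1238) * z3 + 282 * z4 + 114 * z5 + 109 * z6 + (-281) * z7 + (-122) * z8 + (-492) * z9 + 926 * z10 + 210 * z11 + 221 * z12 + (-835) * z13 + 61 * z14 + 470 * z15)^2 + 5638897682 * (1000 * z1 + 238 * z2 + 281 * z3 + 78 * z4 + 1247 * z5 + 232 * z6 + 313 * z7 + 777 * z8 + (-1394) * z9 + (-578) * z10 + 239 * z11 + (-19) * z12 + (-537) * z13 + (-455) * z14 + (-553) * z15)^2 + 238229688 * (1000 * z2 + 37 * z3 + 343 * z4 + 534 * z5 + 443 * z6 + 318 * z7 + 535 * z8 + 37 * z9 + 534 * z10 + 343 * z11 + 443 * z12 + 184 * z13 + 318 * z14 + 535 * z15)^2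 + 3330920925 * (1000 * z3 + 202 * z4 + 592 * z5 + 246 * z6 + 476 * z7 + 544 * z8 + (-73) * z9 + (-248) * z10 + 43 * z11 + 175 * z12 + 316 * z13 + (-6) * z14 + (-127) * z15)^2 + 358928285 * (1000 * z4 + 331 * z5 + 837 * z6 + 232 * z7 + 277 * z8 + 541 * z9 + 1090 * z10 + 246 * z11 + 301 * z12 + 153 * z13 + 535 * z14 + 828 * z15)^2 + 1000637389 * (1000 * z5 + 346 * z6 + 145 * z7 + 471 * z8 + (-744) * z9 + (-290) * z10 + 109 * z11 + (-136) * z12 + (-235) * z13 + (-296) * z14 + (-296) * z15)^2 + 1451191727 * (1000 * z6 + 10 * z7 + (-52) * z8 + 509 * z9 + 152 * z10 + 54 * z11 + 116 * z12 + 187 * z13 + 247 * z14 + 288 * z15)^2 + 200217843 * (1000 * z7 + 517 * z8 + 766 * z9 + 493 * z10 + 410 * z11 + 635 * z12 + 342 * z13 + 399 * z14 + 343 * z15)^2 + 154314440 * (1000 * z8 + (-229) * z9 + (-74) * z10 + 119 * z11 + 776 * z12 + (-111) * z13 + (-192) * z14 + (-42) * z15)^2 + 2152396433 * (1000 * z9 + 601 * z10 + 288 * z11 + 254 * z12 + 340 * z13 + 470 * z14 + 526 * z15)^2 + 632131796 * (1000 * z10 + 104 * z11 + 807 * z12 + 38 * z13 + 172 * z14 + 448 * z15)^2 + 230075695 * (1000 * z11 + 623 * z12 + (-84) * z13 + 171 * z14 + 166 * z15)^2 + 1038329149 * (1000 * z12 + 7 * z13 + (-9) * z14 + (-63) *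 z15)^2 + 1011364928 * (500 * z13 + 33 * z14 + 13 * z15)^2 + 178792013 * (1000 * z14 + 493 * z15)^2 + 137465312000000 * (z15)^2 + 64827948147000 * (z0)^2 + 3557656185000 * (z0 - z1)^2 + 3963056657000 * (z0 - z2)^2 + 2140096654000 * (z0 - z3)^2 + 69385506000 * (z0 + z4)^2 + 3274088838000 * (z0 - z5)^2 + 1815840497000 * (z0 + z6)^2 + 1660671373000 * (z0 - z7)^2 + 2490875774000 * (z0 + z8)^2 + 3327353436000 * (z0 - z9)^2 + 3945287158000 * (z0 + z10)^2 + 1210467930000 * (z0 + z11)^2 + 2133823393000 * (z0 + z12)^2 + 2315101055000 * (z0 - z13)^2 + 2064437887000 * (z0 - z14)^2 + 3610042510000 * (z0 + z15)^2 + 77669467475625 * (z1)^2 + 1604924760635 * (z1 - z2)^2 + 816037715030 * (z1 + z3)^2 + 3039190240170 * (z1 - z4)^2 + 2303106259090 * (z1 - z5)^2 + 947659251835 * (z1 + z6)^2 + 312827078015 * (z1 - z7)^2 + 912787140570 * (z1 + z8)^2 + 701007551020 * (z1 + z9)^2 + 735545431310 * (z1 - z10)^2 + 320513796850 * (z1 - z11)^2 + 2241672058885 * (z1 - z12)^2 + 68491851525 * (z1 - z13)^2 + 83502282715 * (z1 + z14)^2 + 3144299739050 * (z1 + z15)^2 + 74933498507163 * (z2)^2 + 4142714508570 * (z2 + z3)^2 + 1506133529922 * (z2 - z4)^2 + 607326699050 * (z2 + z5)^2 + 728536631075 * (z2 + z6)^2 + 954610213709 * (z2 + z7)^2 + 2607729090622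 * (z2 + z8)^2 + 1695380828252 * (z2 - z9)^2 + 3318619129734 * (z2 - z10)^2 + 53962829494 * (z2 - z11)^2 + 784807987193 * (z2 - z12)^2 + 914006862287 * (z2 + z13)^2 + 1581513256297 * (z2 - z14)^2 + 981760190042 * (z2 - z15)^2 + 53190322243568 * (z3)^2 + 735370470912 * (z3 - z4)^2 + 1012871149366 * (z3 + z5)^2 + 1961106586238 * (z3 - z6)^2 + 3402660525820 * (z3 + z7)^2 + 5942067277006 * (z3 - z8)^2 + 7591409242844 * (z3 + z9)^2 + 4553670562032 * (z3 - z10)^2 + 983042468186 * (z3 - z11)^2 + 3987683327344 * (z3 - z12)^2 + 6320964210940 * (z3 + z13)^2 + 5268440277208 * (z3 + z14)^2 + 4313257127314 * (z3 - z15)^2 + 83806367897550 * (z4)^2 + 3298112333384 * (z4 - z5)^2 + 544326554670 * (z4 + z6)^2 + 532525225046 * (z4 - z7)^2 + 733138394864 * (z4 - z8)^2 + 1756061894914 * (z4 + z9)^2 + 2254895969188 * (z4 + z10)^2 + 26441459646 * (z4 - z11)^2 + 536753215888 * (z4 + z12)^2 + 757867252086 * (z4 + z13)^2 + 587453947234 * (z4 + z14)^2 + 2175590336718 * (z4 + z15)^2 + 75382510972095 * (z5)^2 + 1068566052679 * (z5 + z6)^2 + 745854961400 * (z5 + z7)^2 + 1103812812437 * (z5 - z8)^2 + 1241865499233 * (z5 + z9)^2 + 1809634121254 * (z5 - z10)^2 + 254024368848 * (z5 + z11)^2 + 4122739695063 * (z5 - z12)^2 + 966232328545 * (z5 + z13)^2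 + 2240574524171 * (z5 + z14)^2 + 2033863865302 * (z5 + z15)^2 + 86516440270140 * (z6)^2 + 619402127451 * (z6 - z7)^2 + 1063307758939 * (z6 + z8)^2 + 2577227875035 * (z6 - z9)^2 + 1987711059648 * (z6 + z10)^2 + 1164899941456 * (z6 + z11)^2 + 164601177270 * (z6 + z12)^2 + 1761197309558 * (z6 - z13)^2 + 32032681474 * (z6 + z14)^2 + 960324910436 * (z6 + z15)^2 + 83761264396863 * (z7)^2 + 842388997171 * (z7 - z8)^2 + 1794907503982 * (z7 + z9)^2 + 2322519401696 * (z7 - z10)^2 + 110462544761 * (z7 - z11)^2 + 1671185373751 * (z7 - z12)^2 + 2656554315966 * (z7 + z13)^2 + 1567862699755 * (z7 + z14)^2 + 1495343149192 * (z7 - z15)^2 + 67873084191922 * (z8)^2 + 668460872329 * (z8 + z9)^2 + 3539045409881 * (z8 + z10)^2 + 995064216419 * (z8 + z11)^2 + 2011447978102 * (z8 - z12)^2 + 2282790276366 * (z8 - z13)^2 + 2785961251112 * (z8 + z14)^2 + 3417508888705 * (z8 + z15)^2 + 56867753974778 * (z9)^2 + 5823226491564 * (z9 - z10)^2 + 1811792806809 * (z9 - z11)^2 + 2766346380940 * (z9 + z12)^2 + 5237798389998 * (z9 + z13)^2 + 2200846249008 * (z9 - z14)^2 + 7692252664833 * (z9 - z15)^2 + 59745444797704 * (z10)^2 + 1110444125888 * (z10 + z11)^2 + 5173161739277 * (z10 + z12)^2 + 4964461488196 * (z10 - z13)^2 + 3800142203627 * (z10 - z14)^2 + 3463374266705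 * (z10 + z15)^2 + 90691690698758 * (z11)^2 + 394827050539 * (z11 + z12)^2 + 1522325454073 * (z11 - z13)^2 + 399592236300 * (z11 - z14)^2 + 1545489062785 * (z11 + z15)^2 + 72733071201195 * (z12)^2 + 215440009732 * (z12 - z13)^2 + 1594193796284 * (z12 + z14)^2 + 3501601904608 * (z12 + z15)^2 + 71363541978402 * (z13)^2 + 1708886377738 * (z13 + z14)^2 + 5398608619237 * (z13 - z15)^2 + 70700179476975 * (z14)^2 + 3511894574718 * (z14 - z15)^2 + 55726579417211 * (z15)^2"
  unfolding QL0_def by algebra

lemma QL0_nonneg: "0 \<le> QL0 z0 z1 z2 z3 z4 z5 z6 z7 z8 z9 z10 z11 z12 z13 z14 z15"
proof -
  have "0 \<le> 100000000 * QL0 z0 z1 z2 z3 z4 z5 z6 z7 z8 z9 z10 z11 z12 z13 z14 z15"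
    unfolding QL0_sos by (intro add_nonneg_nonneg mult_nonneg_nonneg) simp_all
  then show ?thesis by simp
qed

definition QL1 :: "real \<Rightarrow> real \<Rightarrow> real \<Rightarrow> real \<Rightarrow> real \<Rightarrow> real \<Rightarrow> real \<Rightarrow> real \<Rightarrow> real \<Rightarrow> real \<Rightarrow> real" where
  "QL1 z0 z1 z2 z3 z4 z5 z6 z7 z8 z9 = 16947840 * z0^2 + 49631400 * z1^2 + 8910720 * z2^2 + 53562600 * z3^2 + 9828000 * z4^2 + 168058800 * z5^2 + 4520880 * z6^2 + 33415200 * z7^2 + 13759200 * z8^2 + 59950800 * z9^2 + 15724800 * z0 * z1 + 16816800 * z0 * z2 - (26535600) * z0 * z3 - (7862400) * z0 * z4 + 83538000 * z0 * z5 + 11802960 * z0 * z6 + 31449600 * z0 * z7 + 19656000 * z0 * z8 + 51105600 * z0 * z9 + 15724800 * z1 * z2 - (80589600) * z1 * z3 + 22604400 * z1 * z4 + 49140000 * z1 * z5 + 5896800 * z1 * z6 + 54054000 * z1 * z7 - (8845200) * z1 * z8 + 40294800 * z1 * z9 - (22604400) * z2 * z3 - (1965600) * z2 * z4 + 49140000 * z2 * z5 + 6739200 * z2 * z6 + 20638800 * z2 * z7 + 9828000 * z2 * z8 + 30466800 * z2 * z9 - (9828000) * z3 * z4 - (118918800) * z3 * z5 - (13759200) * z3 * z6 - (70761600) * z3 * z7 - (6879600) * z3 * z8 - (75675600) * z3 * z9 - (28501200) * z4 * z5 - (3931200) * z4 * z6 + 1965600 * z4 * z7 - (12776400) * z4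 * z8 - (12776400) * z4 * z9 + 41277600 * z5 * z6 + 121867200 * z5 * z7 + 67813200 * z5 * z8 + 192628800 * z5 * z9 + 15724800 * z6 * z7 + 8845200 * z6 * z8 + 24570000 * z6 * z9 + 16707600 * z7 * z8 + 75675600 * z7 * z9 + 38329200 * z8 * z9"

lemma QL1_sos: "100000000 * QL1 z0 z1 z2 z3 z4 z5 z6 z7 z8 z9 = 1590875122 * (1000 * z0 + 494 * z1 + 529 * z2 + (-834) * z3 + (-247) * z4 + 2626 * z5 + 371 * z6 + 988 * z7 + 618 * z8 + 1606 * z9)^2 + 4470656727 * (1000 * z1 + 83 * z2 + (-755) * z3 + 296 * z4 + 88 * z5 + z6 + 431 * z7 + (-208) * z8 + 168 * z9)^2 + 312011379 * (1000 * z2 + (-478) * z3 - z4 + 695 * z5 + 79 * z6 + 132 * z7 + 157 * z8 + 354 * z9)^2 + 1528455749 * (1000 * z3 + 118 * z4 + (-1349) * z5 + (-119) * z6 + (-493) * z7 + (-132) * z8 + (-676) * z9)^2 + 368113523 * (1000 * z4 + (-723) * z5 + (-82) * z6 + 14 * z7 + (-264) * z8 + (-294) * z9)^2 + 2575196722 * (1000 * z5 + 89 * z6 + 293 * z7 + 200 * z8 + 508 * z9)^2 + 82678236 * (1000 * z6 + 506 * z7 + (-43) * z8 + 276 * z9)^2 + 234941715 * (1000 * z7 + 43 * z8 + 75 * z9)^2 + 308403622 * (1000 * z8 + 163 * z9)^2 + 211591478000000 * (z9)^2 + 100449052554000 * (z0)^2 + 347689732000 * (z0 + z1)^2 + 732939538000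 * (z0 - z2)^2 + 9851748000 * (z0 + z3)^2 + 173844866000 * (z0 - z4)^2 + 738070372000 * (z0 - z5)^2 + 66670262000 * (z0 - z6)^2 + 695379464000 * (z0 + z7)^2 + 360825396000 * (z0 - z8)^2 + 334554068000 * (z0 + z9)^2 + 95558090928180 * (z1)^2 + 561540472772 * (z1 - z2)^2 + 1300015648512 * (z1 + z3)^2 + 1021009444196 * (z1 + z4)^2 + 170998739768 * (z1 - z5)^2 + 1196703836428 * (z1 - z6)^2 + 614651881784 * (z1 - z7)^2 + 1955151470376 * (z1 + z8)^2 + 1526619573592 * (z1 + z9)^2 + 95845824633104 * (z2)^2 + 946974534147 * (z2 + z3)^2 + 65432975950 * (z2 + z4)^2 + 2472124365796 * (z2 - z5)^2 + 283524017939 * (z2 - z6)^2 + 648369386515 * (z2 - z7)^2 + 496445402556 * (z2 - z8)^2 + 1017006465316 * (z2 - z9)^2 + 94866862066490 * (z3)^2 + 521647852958 * (z3 - z4)^2 + 780689250718 * (z3 + z5)^2 + 1322788652191 * (z3 + z6)^2 + 777780002843 * (z3 + z7)^2 + 924439211382 * (z3 - z8)^2 + 134756947316 * (z3 + z9)^2 + 101870575777694 * (z4)^2 + 30505031711 * (z4 + z5)^2 + 427757424079 * (z4 - z6)^2 + 33720409006 * (z4 - z7)^2 + 308299845675 * (z4 + z8)^2 + 192393401346 * (z4 + z9)^2 + 94560712553142 * (z5)^2 + 70856910720 * (z5 + z6)^2 + 349804692461 * (z5 + z7)^2 + 805515453461 * (z5 - z8)^2 + 987451547772 * (z5 - z9)^2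 + 99927774888353 * (z6)^2 + 308513366178 * (z6 - z7)^2 + 306111288767 * (z6 + z8)^2 + 59896587874 * (z6 + z9)^2 + 98624219876387 * (z7)^2 + 1021067616224 * (z7 + z8)^2 + 862962874408 * (z7 + z9)^2 + 96493342861036 * (z8)^2 + 259527002913 * (z8 - z9)^2 + 98926091950470 * (z9)^2"
  unfolding QL1_def by algebra

lemma QL1_nonneg: "0 \<le> QL1 z0 z1 z2 z3 z4 z5 z6 z7 z8 z9"
proof -
  have "0 \<le> 100000000 * QL1 z0 z1 z2 z3 z4 z5 z6 z7 z8 z9"
    unfolding QL1_sos by (intro add_nonneg_nonneg mult_nonneg_nonneg) simp_all
  then show ?thesis by simp
qed

definition QL2 :: "real \<Rightarrow> real \<Rightarrow> real \<Rightarrow> real \<Rightarrow> real \<Rightarrow> real \<Rightarrow> real \<Rightarrow> real \<Rightarrow> real \<Rightarrow> real \<Rightarrow> real" where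
  "QL2 z0 z1 z2 z3 z4 z5 z6 z7 z8 z9 = 49631400 * z0^2 + 16947840 * z1^2 + 8910720 * z2^2 + 168058800 * z3^2 + 33415200 * z4^2 + 4520880 * z5^2 + 59950800 * z6^2 + 53562600 * z7^2 + 9828000 * z8^2 + 13759200 * z9^2 + 15724800 * z0 * z1 + 15724800 * z0 * z2 + 49140000 * z0 * z3 + 54054000 * z0 * z4 + 5896800 * z0 * z5 + 40294800 * z0 * z6 - (80589600) * z0 * z7 + 22604400 * z0 * z8 - (8845200) * z0 * z9 + 16816800 * z1 * z2 + 83538000 * z1 * z3 + 31449600 * z1 * z4 + 11802960 * z1 * z5 + 51105600 * z1 * z6 - (26535600) * z1 * z7 - (7862400) * z1 * z8 + 19656000 * z1 * z9 + 49140000 * z2 * z3 + 20638800 * z2 * z4 + 6739200 * z2 * z5 + 30466800 * z2 * z6 - (22604400) * z2 * z7 - (1965600) * z2 * z8 + 9828000 * z2 * z9 + 121867200 * z3 * z4 + 41277600 * z3 * z5 + 192628800 * z3 * z6 - (118918800) * z3 * z7 - (28501200) * z3 * z8 + 67813200 * z3 * z9 + 15724800 * z4 * z5 + 75675600 * z4 * z6 - (70761600) * z4 * z7 + 1965600 * z4 * z8 + 16707600 * z4 * z9 + 24570000 * z5 * z6 - (13759200) * z5 * z7 - (3931200) * z5 * z8 + 8845200 * z5 * z9 - (75675600) * z6 * z7 - (12776400) * z6 * z8 + 38329200 * z6 * z9 - (9828000) * z7 * z8 - (6879600) * z7 * z9 - (12776400) * z8 * z9"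

lemma QL2_sos: "100000000 * QL2 z0 z1 z2 z3 z4 z5 z6 z7 z8 z9 = 4859231122 * (1000 * z0 + 162 * z1 + 162 * z2 + 506 * z3 + 556 * z4 + 61 * z5 + 415 * z6 + (-829) * z7 + 233 * z8 + (-91) * z9)^2 + 1463658835 * (1000 * z1 + 488 * z2 + 2582 * z3 + 776 * z4 + 371 * z5 + 1523 * z6 + (-461) * z7 + (-394) * z8 + 720 * z9)^2 + 312011379 * (1000 * z2 + 695 * z3 + 132 * z4 + 79 * z5 + 354 * z6 + (-478) * z7 - z8 + 157 * z9)^2 + 5550254863 * (1000 * z3 + 318 * z4 + 90 * z5 + 501 * z6 + (-372) * z7 + (-92) * z8 + 155 * z9)^2 + 285971287 * (1000 * z4 + 140 * z5 + 121 * z6 + (-340) * z7 + 274 * z8 + (-56) * z9)^2 + 77182159 * (1000 * z5 + 228 * z6 + 217 * z7 + (-221) * z8 - z9)^2 + 220988991 * (1000 * z6 + 38 * z7 + 87 * z8 + 222 * z9)^2 + 11601209984 * (250 * z7 + 7 * z8 + 38 * z9)^2 + 20164942848 * (125 * z8 + (-18) * z9)^2 + 296955103000000 * (z9)^2 + 92617317314000 * (z0)^2 + 955441764000 * (z0 - z1)^2 + 955441764000 * (z0 - z2)^2 + 1770947732000 * (z0 - z3)^2 + 967496168000 * (z0 + z4)^2 + 1573098442000 * (z0 - z5)^2 + 1840915630000 * (z0 - z6)^2 + 1177399862000 * (z0 - z7)^2 + 1980851426000 * (z0 - z8)^2 + 69967898000 * (z0 - z9)^2 + 97360886554564 * (z1)^2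 + 951173045768 * (z1 - z2)^2 + 588005502584 * (z1 - z3)^2 + 999921580784 * (z1 - z4)^2 + 888349732604 * (z1 - z5)^2 + 558514037060 * (z1 - z6)^2 + 551744157356 * (z1 + z7)^2 + 145043058988 * (z1 + z8)^2 + 600424000524 * (z1 + z9)^2 + 94102266040412 * (z2)^2 + 2402352578944 * (z2 - z3)^2 + 1196204557264 * (z2 - z4)^2 + 700325647684 * (z2 - z5)^2 + 1624510482100 * (z2 - z6)^2 + 782861176636 * (z2 + z7)^2 + 36084971108 * (z2 + z8)^2 + 222169568076 * (z2 - z9)^2 + 85538438893270 * (z3)^2 + 44703828828 * (z3 + z4)^2 + 4829948786517 * (z3 - z5)^2 + 2063300777460 * (z3 - z6)^2 + 2925263541588 * (z3 + z7)^2 + 1878506599029 * (z3 + z8)^2 + 926789759373 * (z3 - z9)^2 + 97155760255600 * (z4)^2 + 2085135714184 * (z4 - z5)^2 + 698953625706 * (z4 - z6)^2 + 1250440502880 * (z4 - z7)^2 + 344542591340 * (z4 + z8)^2 + 561600386154 * (z4 - z9)^2 + 86149019212835 * (z5)^2 + 2955566221549 * (z5 - z6)^2 + 2565904082541 * (z5 + z7)^2 + 392772344565 * (z5 + z8)^2 + 715691470485 * (z5 - z9)^2 + 88500243414086 * (z6)^2 + 2361619468155 * (z6 + z7)^2 + 717414041036 * (z6 + z8)^2 + 471095622633 * (z6 - z9)^2 + 90926013532494 * (z7)^2 + 553035945127 * (z7 + z8)^2 + 1201102497603 * (z7 + z9)^2 + 95196607149932 * (z8)^2 + 1004540276120 *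 (z8 + z9)^2 + 98082147700921 * (z9)^2"
  unfolding QL2_def by algebra

lemma QL2_nonneg: "0 \<le> QL2 z0 z1 z2 z3 z4 z5 z6 z7 z8 z9"
proof -
  have "0 \<le> 100000000 * QL2 z0 z1 z2 z3 z4 z5 z6 z7 z8 z9"
    unfolding QL2_sos by (intro add_nonneg_nonneg mult_nonneg_nonneg) simp_all
  then show ?thesis by simp
qed

definition QL3 :: "real \<Rightarrow> real \<Rightarrow> real \<Rightarrow> real \<Rightarrow> real \<Rightarrow> real \<Rightarrow> real \<Rightarrow> real \<Rightarrow> real" where
  "QL3 z0 z1 z2 z3 z4 z5 z6 z7 = 14796600 * z0^2 + 14796600 * z1^2 + 1572480 * z2^2 + 47665800 * z3^2 + 3046680 * z4^2 + 47665800 * z5^2 + 3046680 * z6^2 + 4422600 * z7^2 + 12776400 * z0 * z1 + 131040 * z0 * z2 + 12776400 * z0 * z3 + 1965600 * z0 * z4 - (5896800) * z0 * z5 + 3790800 * z0 * z6 + 5896800 * z0 * z7 + 131040 * z1 * z2 - (5896800) * z1 * z3 + 3790800 * z1 * z4 + 12776400 * z1 * z5 + 1965600 * z1 * z6 + 5896800 * z1 * z7 + 5896800 * z3 * z4 - (81572400) * z3 * z5 - (2948400) * z3 * z6 + 982800 * z3 * z7 - (2948400) * z4 * z5 + 982800 * z4 * z7 + 5896800 * z5 * z6 + 982800 * z5 * z7 + 982800 * z6 * z7"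

lemma QL3_sos: "1000000 * QL3 z0 z1 z2 z3 z4 z5 z6 z7 = 1385358999 * (100 * z0 + 46 * z1 + 46 * z3 + 7 * z4 + (-21) * z5 + 14 * z6 + 21 * z7)^2 + 1090784818 * (100 * z1 + (-54) * z3 + 13 * z4 + 71 * z5 + z6 + 15 * z7)^2 + 62904583 * (100 * z2 + (-2) * z3 - z4 + (-2) * z5 - z6 + (-3) * z7)^2 + 4059190509 * (100 * z3 + 8 * z4 + (-87) * z5 + (-6) * z6)^2 + 157899873 * (100 * z4 + 35 * z5 + 2 * z6 + 5 * z7)^2 + 980401770 * (100 * z5 + 13 * z6)^2 + 3868976675 * (20 * z6 + z7)^2 + 2612867650000 * (z7)^2 + 710949297300 * (z0)^2 + 15548604600 * (z0 + z1)^2 + 65520000000 * (z0 + z2)^2 + 15548604600 * (z0 + z3)^2 + 13048700700 * (z0 + z4)^2 + 39146102100 * (z0 - z5)^2 + 44102598600 * (z0 - z6)^2 + 39146102100 * (z0 + z7)^2 + 771951947322 * (z1)^2 + 65520000000 * (z1 + z2)^2 + 10418375316 * (z1 + z3)^2 + 31294138922 * (z1 + z4)^2 + 18115414766 * (z1 - z5)^2 + 18449677156 * (z1 - z6)^2 + 26034020034 * (z1 - z7)^2 + 755780045300 * (z2)^2 + 12580916600 * (z2 + z3)^2 + 6290458300 * (z2 + z4)^2 + 12580916600 * (z2 + z5)^2 + 6290458300 * (z2 + z6)^2 + 18871374900 * (z2 + z7)^2 + 689327337476 * (z3)^2 + 20567128192 * (z3 + z4)^2 + 48831595214 * (z3 +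 z5)^2 + 127919681050 * (z3 + z6)^2 + 36301482048 * (z3 + z7)^2 + 862136793646 * (z4)^2 + 4925384563 * (z4 - z5)^2 + 13252880713 * (z4 + z6)^2 + 4089462612 * (z4 - z7)^2 + 497200234052 * (z5)^2 + 126348723346 * (z5 - z6)^2 + 87352417884 * (z5 - z7)^2 + 566186336729 * (z6)^2 + 11404563955 * (z6 - z7)^2 + 721780409111 * (z7)^2"
  unfolding QL3_def by algebra

lemma QL3_nonneg: "0 \<le> QL3 z0 z1 z2 z3 z4 z5 z6 z7"
proof -
  have "0 \<le> 1000000 * QL3 z0 z1 z2 z3 z4 z5 z6 z7"
    unfolding QL3_sos by (intro add_nonneg_nonneg mult_nonneg_nonneg) simp_all
  then show ?thesis by simp
qed

definition QL4 :: "real \<Rightarrow> real \<Rightarrow> real \<Rightarrow> real \<Rightarrow> real \<Rightarrow> real \<Rightarrow> real \<Rightarrow> real \<Rightarrow> real \<Rightarrow> real \<Rightarrow> real" where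
  "QL4 z0 z1 z2 z3 z4 z5 z6 z7 z8 z9 = 10679760 * z0^2 + 8615880 * z1^2 + 5012280 * z2^2 + 24144120 * z3^2 + 36527400 * z4^2 + 21411000 * z5^2 + 10445760 * z6^2 + 11891880 * z7^2 + 26208000 * z8^2 + 19656000 * z9^2 + 5724810 * z0 * z1 - (884520) * z0 * z2 + 393120 * z0 * z3 + 9664200 * z0 * z4 - (17120376) * z0 * z5 + 13366080 * z0 * z6 - (90090) * z0 * z7 - (8906040) * z0 * z8 - (12634440) * z0 * z9 - (327600) * z1 * z2 - (7796880) * z1 * z3 + 13719888 * z1 * z4 - (14171976) * z1 * z5 + 7772310 * z1 * z6 + 9434880 * z1 * z7 - (12634440) * z1 * z8 - (6940440) * z1 * z9 + 2784600 * z2 * z3 + 9205560 * z2 * z4 + 892710 * z2 * z5 - (2457000) * z2 * z6 + 491400 * z2 * z7 + 3982160 * z2 * z8 + 2016560 * z2 * z9 + 9762480 * z3 * z4 + 22183200 * z3 * z5 - (6940440) * z3 * z6 - (840840) * z3 * z7 + 39452400 * z3 * z8 + 23466240 * z3 * z9 - (19514040) * z4 * z5 + 10861760 * z4 * z6 + 18925920 * z4 * z7 + 221130 * z4 * z8 - (3970512) * z4 * z9 - (19514040) * z5 * z6 - (3009240) * z5 * z7 + 32311440 * z5 * z8 + 30607200 * z5 * z9 + 2999360 * z6 * z7 - (15764112) * z6 * z8 - (13538070) * z6 * z9 - (1022112) * z7 * z8 + 8255520 * z7 * z9 + 32760000 * z8 * z9"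

lemma QL4_sos: "1000000 * QL4 z0 z1 z2 z3 z4 z5 z6 z7 z8 z9 = 913013725 * (100 * z0 + 31 * z1 + (-5) * z2 + 2 * z3 + 53 * z4 + (-94) * z5 + 73 * z6 + (-49) * z8 + (-69) * z9)^2 + 616885974 * (100 * z1 + (-64) * z3 + 87 * z4 + (-71) * z5 + 29 * z6 + 77 * z7 + (-80) * z8 + (-24) * z9)^2 + 344113186 * (100 * z2 + 40 * z3 + 141 * z4 + (-26) * z6 + 8 * z7 + 51 * z8 + 20 * z9)^2 + 1949013881 * (100 * z3 + 32 * z4 + 43 * z5 + (-11) * z6 + 13 * z7 + 82 * z8 + 55 * z9)^2 + 1892368630 * (100 * z4 + (-22) * z5 + 12 * z6 + 22 * z7 + (-5) * z8 + (-9) * z9)^2 + 412943188 * (100 * z5 + (-19) * z6 + 40 * z7 + 33 * z8 + 81 * z9)^2 + 259327027 * (100 * z6 + 12 * z7 + (-25) * z8 + 18 * z9)^2 + 472636815 * (100 * z7 + 16 * z8 + 59 * z9)^2 + 153085325600 * (5 * z8 + 2 * z9)^2 + 2225151320000 * (z9)^2 + 1359085065000 * (z0)^2 + 32062452500 * (z0 + z1)^2 + 14246862500 * (z0 + z2)^2 + 13957255000 * (z0 + z3)^2 + 6872742500 * (z0 - z4)^2 + 22141015000 * (z0 + z5)^2 + 18039807500 * (z0 + z6)^2 + 45045000000 * (z0 - z7)^2 + 20747252500 * (z0 + z8)^2 + 17425297500 * (z0 - z9)^2 + 1350560453450 * (z1)^2 + 22282872625 * (z1 - z2)^2 + 6976617350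 * (z1 - z3)^2 + 7045523975 * (z1 - z4)^2 + 45575589950 * (z1 - z5)^2 + 31035615725 * (z1 + z6)^2 + 32581999800 * (z1 - z7)^2 + 4735640275 * (z1 + z8)^2 + 36757304625 * (z1 - z9)^2 + 1414685296550 * (z2)^2 + 24977393250 * (z2 + z3)^2 + 7267285475 * (z2 - z4)^2 + 17238549250 * (z2 + z5)^2 + 555706775 * (z2 - z6)^2 + 29590548800 * (z2 - z7)^2 + 12414388775 * (z2 + z8)^2 + 5063892875 * (z2 + z9)^2 + 1228648982944 * (z3)^2 + 41638860142 * (z3 + z4)^2 + 79357026144 * (z3 + z5)^2 + 43213346434 * (z3 + z6)^2 + 24240184948 * (z3 - z7)^2 + 26685565470 * (z3 - z8)^2 + 83287856314 * (z3 - z9)^2 + 1147476041746 * (z4)^2 + 83486925092 * (z4 + z5)^2 + 18756055561 * (z4 + z6)^2 + 31719574130 * (z4 - z7)^2 + 132641993595 * (z4 + z8)^2 + 55838742043 * (z4 - z9)^2 + 1273760203918 * (z5)^2 + 15690657351 * (z5 - z6)^2 + 42530525299 * (z5 + z7)^2 + 3370436224 * (z5 + z8)^2 + 1672639849 * (z5 + z9)^2 + 1366757280706 * (z6)^2 + 24482780111 * (z6 - z7)^2 + 50049223479 * (z6 + z8)^2 + 9633244774 * (z6 - z9)^2 + 1245526271054 * (z7)^2 + 55569368046 * (z7 + z8)^2 + 11343458565 * (z7 + z9)^2 + 1072502803265 * (z8)^2 + 81647504419 * (z8 - z9)^2 + 1188367681201 * (z9)^2"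
  unfolding QL4_def by algebra

lemma QL4_nonneg: "0 \<le> QL4 z0 z1 z2 z3 z4 z5 z6 z7 z8 z9"
proof -
  have "0 \<le> 1000000 * QL4 z0 z1 z2 z3 z4 z5 z6 z7 z8 z9"
    unfolding QL4_sos by (intro add_nonneg_nonneg mult_nonneg_nonneg) simp_all
  then show ?thesis by simp
qed

definition QL5 :: "real \<Rightarrow> real \<Rightarrow> real \<Rightarrow> real \<Rightarrow> real \<Rightarrow> real \<Rightarrow> real \<Rightarrow> real" where
  "QL5 z0 z1 z2 z3 z4 z5 z6 = 3177720 * z0^2 + 9336600 * z1^2 + 1474200 * z2^2 + 12285000 * z3^2 + 36363600 * z4^2 + 4914000 * z5^2 + 8910720 * z6^2 + 131040 * z0 * z2 + 1965600 * z0 * z3 + 982800 * z0 * z4 + 982800 * z0 * z5 + 5896800 * z1 * z3 + 25552800 * z1 * z4 - (4914000) * z1 * z5 + 11793600 * z1 * z6 + 16707600 * z3 * z4 + 982800 * z3 * z5 + 2948400 * z3 * z6 - (9828000) * z4 * z5 + 26535600 * z4 * z6 - (3931200) * z5 * z6"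

lemma QL5_sos: "1000000 * QL5 z0 z1 z2 z3 z4 z5 z6 = 229486424 * (100 * z0 + 3 * z2 + 43 * z3 + 21 * z4 + 21 * z5)^2 + 845374424 * (100 * z1 + 35 * z3 + 151 * z4 + (-29) * z5 + 70 * z6)^2 + 58947360 * (100 * z2 + (-5) * z3 + (-2) * z4 + (-2) * z5)^2 + 995160487 * (100 * z3 + 37 * z4 + 11 * z5 + (-6) * z6)^2 + 1470005643 * (100 * z4 + (-12) * z5 + 31 * z6)^2 + 4605627936 * (25 * z5 + 3 * z6)^2 + 2415787210000 * (z6)^2 + 856581190400 * (z0)^2 + 3325927200 * (z0 - z2)^2 + 3991623200 * (z0 - z3)^2 + 9478509600 * (z0 + z4)^2 + 9478509600 * (z0 + z5)^2 + 834963940000 * (z1)^2 + 10410484000 * (z1 - z3)^2 + 11246197600 * (z1 + z4)^2 + 5414170400 * (z1 - z5)^2 + 20820968000 * (z1 - z6)^2 + 873868680864 * (z2)^2 + 130068696 * (z2 - z3)^2 + 2668172712 * (z2 - z4)^2 + 2668172712 * (z2 - z5)^2 + 806480111928 * (z3)^2 + 3913347212 * (z3 - z4)^2 + 46962790188 * (z3 + z5)^2 + 128953400 * (z3 + z6)^2 + 847709811596 * (z4)^2 + 45431753663 * (z4 + z5)^2 + 3899526866 * (z4 - z6)^2 + 763422042052 * (z5)^2 + 17610676858 * (z5 + z6)^2 + 820186135397 * (z6)^2"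
  unfolding QL5_def by algebra

lemma QL5_nonneg: "0 \<le> QL5 z0 z1 z2 z3 z4 z5 z6"
proof -
  have "0 \<le> 1000000 * QL5 z0 z1 z2 z3 z4 z5 z6"
    unfolding QL5_sos by (intro add_nonneg_nonneg mult_nonneg_nonneg) simp_all
  then show ?thesis by simp
qed

definition QL6 :: "real \<Rightarrow> real \<Rightarrow> real \<Rightarrow> real \<Rightarrow> real \<Rightarrow> real \<Rightarrow> real" where
  "QL6 z0 z1 z2 z3 z4 z5 = 5896800 * z0^2 + 5410080 * z1^2 + 2948400 * z2^2 + 8353800 * z3^2 + 4422600 * z4^2 + 5405400 * z5^2 - (982800) * z0 * z1 + 3931200 * z0 * z3 - (1965600) * z0 * z4 + 3931200 * z0 * z5 - (140400) * z1 * z2 + 982800 * z1 * z3 + 1965600 * z1 * z4 - (982800) * z1 * z5 + 982800 * z2 * z3 - (982800) * z3 * z4 + 1965600 * z3 * z5 - (1965600) * z4 * z5"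

lemma QL6_sos: "1000000 * QL6 z0 z1 z2 z3 z4 z5 = 417118505 * (100 * z0 + (-12) * z1 + 47 * z3 + (-24) * z4 + 47 * z5)^2 + 362657408 * (100 * z1 + (-2) * z2 + 20 * z3 + 24 * z4 + (-7) * z5)^2 + 122142618 * (100 * z2 + 41 * z3 + z4)^2 + 2139474492 * (50 * z3 + (-2) * z4 + z5)^2 + 89992648400 * (5 * z4 - z5)^2 + 2641325280000 * (z5)^2 + 1687902279000 * (z0)^2 + 9142206000 * (z0 + z1)^2 + 5143026500 * (z0 + z3)^2 + 18284412000 * (z0 + z4)^2 + 5143026500 * (z0 + z5)^2 + 1700634260640 * (z1)^2 + 2331481600 * (z1 + z2)^2 + 1340020820 * (z1 + z3)^2 + 7707908640 * (z1 - z4)^2 + 2284977580 * (z1 - z5)^2 + 1707799648752 * (z2)^2 + 5121562520 * (z2 + z3)^2 + 5193293784 * (z2 + z4)^2 + 5077203712 * (z2 - z5)^2 + 1702552423920 * (z3)^2 + 13973719662 * (z3 + z4)^2 + 5183534975 * (z3 + z5)^2 + 1666915180272 * (z4)^2 + 2878309168 * (z4 + z5)^2 + 1712190554636 * (z5)^2"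
  unfolding QL6_def by algebra

lemma QL6_nonneg: "0 \<le> QL6 z0 z1 z2 z3 z4 z5"
proof -
  have "0 \<le> 1000000 * QL6 z0 z1 z2 z3 z4 z5"
    unfolding QL6_sos by (intro add_nonneg_nonneg mult_nonneg_nonneg) simp_all
  then show ?thesis by simp
qed

definition QL7 :: "real \<Rightarrow> real \<Rightarrow> real \<Rightarrow> real \<Rightarrow> real" where
  "QL7 z0 z1 z2 z3 = 8910720 * z0^2 + 10740600 * z1^2 + 48157200 * z2^2 + 4422600 * z3^2 + 7862400 * z0 * z1 + 22604400 * z0 * z2 + 3931200 * z0 * z3 + 34398000 * z1 * z2 + 3931200 * z1 * z3 + 8845200 * z2 * z3"

lemma QL7_sos: "1000000 * QL7 z0 z1 z2 z3 = 684218280 * (100 * z0 + 57 * z1 + 165 * z2 + 29 * z3)^2 + 641337813 * (100 * z1 + 167 * z2 + 13 * z3)^2 + 3819939268 * (50 * z2 - z3)^2 + 1675274700000 * (z3)^2 + 2006150004000 * (z0)^2 + 31155804000 * (z0 + z1)^2 + 12598380000 * (z0 + z2)^2 + 18633012000 * (z0 - z3)^2 + 2018607248520 * (z1)^2 + 53585599500 * (z1 + z2)^2 + 848026260 * (z1 + z3)^2 + 1974323012320 * (z2)^2 + 52731898423 * (z2 - z3)^2 + 1987478760172 * (z3)^2"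
  unfolding QL7_def by algebra

lemma QL7_nonneg: "0 \<le> QL7 z0 z1 z2 z3"
proof -
  have "0 \<le> 1000000 * QL7 z0 z1 z2 z3"
    unfolding QL7_sos by (intro add_nonneg_nonneg mult_nonneg_nonneg) simp_all
  then show ?thesis by simp
qed

definition QL8 :: "real \<Rightarrow> real \<Rightarrow> real \<Rightarrow> real \<Rightarrow> real \<Rightarrow> real \<Rightarrow> real \<Rightarrow> real \<Rightarrow> real \<Rightarrow> real \<Rightarrow> real" where
  "QL8 z0 z1 z2 z3 z4 z5 z6 z7 z8 z9 = 8615880 * z0^2 + 10679760 * z1^2 + 5012280 * z2^2 + 21411000 * z3^2 + 11891880 * z4^2 + 10445760 * z5^2 + 19656000 * z6^2 + 24144120 * z7^2 + 36527400 * z8^2 + 26208000 * z9^2 + 5724810 * z0 * z1 - (327600) * z0 * z2 - (14171976) * z0 * z3 + 9434880 * z0 * z4 + 7772310 * z0 * z5 - (6940440) * z0 * z6 - (7796880) * z0 * z7 + 13719888 * z0 * z8 - (12634440) * z0 * z9 - (884520) * z1 * z2 - (17120376) * z1 * z3 - (90090) * z1 * z4 + 13366080 * z1 * z5 - (12634440) * z1 * z6 + 393120 * z1 * z7 + 9664200 * z1 * z8 - (8906040) * z1 * z9 + 892710 * z2 * z3 + 491400 * z2 * z4 - (2457000) * z2 * z5 + 2016560 * z2 * z6 + 2784600 * z2 * z7 + 9205560 * z2 * z8 + 3982160 * z2 * z9 - (3009240) * z3 * z4 - (19514040) * z3 * z5 + 30607200 * z3 * z6 + 22183200 * z3 * z7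 - (19514040) * z3 * z8 + 32311440 * z3 * z9 + 2999360 * z4 * z5 + 8255520 * z4 * z6 - (840840) * z4 * z7 + 18925920 * z4 * z8 - (1022112) * z4 * z9 - (13538070) * z5 * z6 - (6940440) * z5 * z7 + 10861760 * z5 * z8 - (15764112) * z5 * z9 + 23466240 * z6 * z7 - (3970512) * z6 * z8 + 32760000 * z6 * z9 + 9762480 * z7 * z8 + 39452400 * z7 * z9 + 221130 * z8 * z9"

lemma QL8_sos: "1000000 * QL8 z0 z1 z2 z3 z4 z5 z6 z7 z8 z9 = 706625725 * (100 * z0 + 41 * z1 + (-2) * z2 + (-100) * z3 + 67 * z4 + 55 * z5 + (-49) * z6 + (-55) * z7 + 97 * z8 + (-89) * z9)^2 + 797063200 * (100 * z1 + (-5) * z2 + (-71) * z3 + (-25) * z4 + 64 * z5 + (-62) * z6 + 22 * z7 + 26 * z8 + (-24) * z9)^2 + 344113186 * (100 * z2 + 8 * z4 + (-26) * z5 + 20 * z6 + 40 * z7 + 141 * z8 + 51 * z9)^2 + 869392375 * (100 * z3 + 21 * z4 + (-25) * z5 + 96 * z6 + 97 * z7 + (-16) * z8 + 97 * z9)^2 + 630817987 * (100 * z4 + 11 * z5 + 54 * z6 + 12 * z7 + 84 * z8 + 21 * z9)^2 + 261278970 * (100 * z5 + 8 * z6 - z7 + 25 * z8 + (-28) * z9)^2 + 339367797 * (100 * z6 + 64 * z7 + 3 * z8 + 88 * z9)^2 + 982921253 * (100 * z7 + 71 * z8 + 58 * z9)^2 + 4435683284 * (50 * z8 + 3 * z9)^2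 + 2999198310000 * (z9)^2 + 1401739852500 * (z0)^2 + 34760472500 * (z0 - z1)^2 + 22474855000 * (z0 - z2)^2 + 19730750000 * (z0 - z3)^2 + 16952357500 * (z0 - z4)^2 + 286487500 * (z0 - z5)^2 + 7753947500 * (z0 - z6)^2 + 11998512500 * (z0 - z7)^2 + 5674467500 * (z0 + z8)^2 + 28251047500 * (z0 - z9)^2 + 1280754673275 * (z1)^2 + 14214909450 * (z1 + z2)^2 + 3873807500 * (z1 - z3)^2 + 6512133425 * (z1 + z4)^2 + 11605489875 * (z1 - z5)^2 + 44182921525 * (z1 + z6)^2 + 36461969875 * (z1 + z7)^2 + 50514828325 * (z1 - z8)^2 + 38408950525 * (z1 + z9)^2 + 1401382411850 * (z2)^2 + 22072419000 * (z2 + z3)^2 + 34535601650 * (z2 - z4)^2 + 1016662650 * (z2 - z5)^2 + 3714714950 * (z2 + z6)^2 + 25795378250 * (z2 + z7)^2 + 8512315950 * (z2 - z8)^2 + 14675788350 * (z2 + z9)^2 + 1354601658300 * (z3)^2 + 10738810000 * (z3 - z4)^2 + 75242394200 * (z3 - z5)^2 + 13705058900 * (z3 - z6)^2 + 17065193400 * (z3 + z7)^2 + 40344000300 * (z3 - z8)^2 + 75449317200 * (z3 + z9)^2 + 1398003626157 * (z4)^2 + 5172077238 * (z4 + z5)^2 + 2005972385 * (z4 - z6)^2 + 16169515170 * (z4 - z7)^2 + 6224433383 * (z4 - z8)^2 + 11752942288 * (z4 - z9)^2 + 1358096776523 * (z5)^2 + 20180397083 * (z5 - z6)^2 + 45928021944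 * (z5 - z7)^2 + 12407337213 * (z5 + z8)^2 + 48401245911 * (z5 - z9)^2 + 1340285876019 * (z6)^2 + 33748193491 * (z6 - z7)^2 + 7732930673 * (z6 + z8)^2 + 22340204377 * (z6 + z9)^2 + 1295542332403 * (z7)^2 + 69565380535 * (z7 - z8)^2 + 27468045922 * (z7 + z9)^2 + 1264098213731 * (z8)^2 + 149471594731 * (z8 - z9)^2 + 1203574619747 * (z9)^2"
  unfolding QL8_def by algebra

lemma QL8_nonneg: "0 \<le> QL8 z0 z1 z2 z3 z4 z5 z6 z7 z8 z9"
proof -
  have "0 \<le> 1000000 * QL8 z0 z1 z2 z3 z4 z5 z6 z7 z8 z9"
    unfolding QL8_sos by (intro add_nonneg_nonneg mult_nonneg_nonneg) simp_all
  then show ?thesis by simp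
qed

definition QL9 :: "real \<Rightarrow> real \<Rightarrow> real \<Rightarrow> real \<Rightarrow> real \<Rightarrow> real \<Rightarrow> real" where
  "QL9 z0 z1 z2 z3 z4 z5 = 5410080 * z0^2 + 5896800 * z1^2 + 2948400 * z2^2 + 4422600 * z3^2 + 5405400 * z4^2 + 8353800 * z5^2 - (982800) * z0 * z1 - (140400) * z0 * z2 + 1965600 * z0 * z3 - (982800) * z0 * z4 + 982800 * z0 * z5 - (1965600) * z1 * z3 + 3931200 * z1 * z4 + 3931200 * z1 * z5 + 982800 * z2 * z5 - (1965600) * z3 * z4 - (982800) * z3 * z5 + 1965600 * z4 * z5"

lemma QL9_sos: "1000000 * QL9 z0 z1 z2 z3 z4 z5 = 368446505 * (100 * z0 + (-13) * z1 + (-2) * z2 + 27 * z3 + (-13) * z4 + 13 * z5)^2 + 410564665 * (100 * z1 + (-21) * z3 + 46 * z4 + 49 * z5)^2 + 122142618 * (100 * z2 + z3 + 41 * z5)^2 + 225790944 * (100 * z3 + (-20) * z4 + (-9) * z5)^2 + 264219978 * (100 * z4 + 3 * z5)^2 + 5327750500000 * (z5)^2 + 1672861455000 * (z0)^2 + 12419543500 * (z0 - z1)^2 + 3489301000 * (z0 + z2)^2 + 12005563500 * (z0 - z3)^2 + 12419543500 * (z0 - z4)^2 + 12419543500 * (z0 + z5)^2 + 1667340535770 * (z1)^2 + 9579609130 * (z1 - z2)^2 + 8710519755 * (z1 + z3)^2 + 14735081655 * (z1 + z4)^2 + 16100600845 * (z1 + z5)^2 + 1694974789920 * (z2)^2 +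 7681849470 * (z2 + z3)^2 + 9579609130 * (z2 - z4)^2 + 194875330 * (z2 + z5)^2 + 1681176362184 * (z3)^2 + 5287922355 * (z3 - z4)^2 + 49680708 * (z3 - z5)^2 + 1699585736390 * (z4)^2 + 253658885 * (z4 - z5)^2 + 1723009133598 * (z5)^2"
  unfolding QL9_def by algebra

lemma QL9_nonneg: "0 \<le> QL9 z0 z1 z2 z3 z4 z5"
proof -
  have "0 \<le> 1000000 * QL9 z0 z1 z2 z3 z4 z5"
    unfolding QL9_sos by (intro add_nonneg_nonneg mult_nonneg_nonneg) simp_all
  then show ?thesis by simp
qed

definition QL10 :: "real \<Rightarrow> real \<Rightarrow> real \<Rightarrow> real \<Rightarrow> real \<Rightarrow> real \<Rightarrow> real \<Rightarrow> real" where
  "QL10 z0 z1 z2 z3 z4 z5 z6 = 9336600 * z0^2 + 3177720 * z1^2 + 1474200 * z2^2 + 4914000 * z3^2 + 8910720 * z4^2 + 12285000 * z5^2 + 36363600 * z6^2 - (4914000) * z0 * z3 + 11793600 * z0 * z4 + 5896800 * z0 * z5 + 25552800 * z0 * z6 + 131040 * z1 * z2 + 982800 * z1 * z3 + 1965600 * z1 * z5 + 982800 * z1 * z6 - (3931200) * z3 * z4 + 982800 * z3 * z5 - (9828000) * z3 * z6 + 2948400 * z4 * z5 + 26535600 * z4 * z6 + 16707600 * z5 * z6"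

lemma QL10_sos: "1000000 * QL10 z0 z1 z2 z3 z4 z5 z6 = 845374424 * (100 * z0 + (-29) * z3 + 70 * z4 + 35 * z5 + 151 * z6)^2 + 229486424 * (100 * z1 + 3 * z2 + 21 * z3 + 43 * z5 + 21 * z6)^2 + 58947360 * (100 * z2 + (-2) * z3 + (-5) * z5 + (-2) * z6)^2 + 321148311 * (100 * z3 + (-8) * z4 + 35 * z5 + (-41) * z6)^2 + 389489259 * (100 * z4 + (-13) * z5 + 109 * z6)^2 + 948644027 * (100 * z5 + 49 * z6)^2 + 8573048230000 * (z6)^2 + 834963940000 * (z0)^2 + 5414170400 * (z0 - z3)^2 + 20820968000 * (z0 - z4)^2 + 10410484000 * (z0 - z5)^2 + 11246197600 * (z0 + z6)^2 + 856581190400 * (z1)^2 + 3325927200 * (z1 - z2)^2 + 9478509600 * (z1 + z3)^2 + 3991623200 * (z1 - z5)^2 + 9478509600 * (z1 + z6)^2 + 873868680864 * (z2)^2 + 2668172712 * (z2 - z3)^2 + 130068696 * (z2 - z5)^2 + 2668172712 * (z2 - z6)^2 + 844344502000 * (z3)^2 + 7428729520 * (z3 + z4)^2 + 17620237388 * (z3 + z5)^2 + 3163375372 * (z3 + z6)^2 + 805402537168 * (z4)^2 + 709775020 * (z4 - z5)^2 + 18577230788 * (z4 - z6)^2 + 802510595898 * (z5)^2 + 42578828676 * (z5 + z6)^2 + 880951405407 * (z6)^2"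
  unfolding QL10_def by algebra

lemma QL10_nonneg: "0 \<le> QL10 z0 z1 z2 z3 z4 z5 z6"
proof -
  have "0 \<le> 1000000 * QL10 z0 z1 z2 z3 z4 z5 z6"
    unfolding QL10_sos by (intro add_nonneg_nonneg mult_nonneg_nonneg) simp_all
  then show ?thesis by simp
qed

definition QL11 :: "real \<Rightarrow> real \<Rightarrow> real \<Rightarrow> real \<Rightarrow> real" where
  "QL11 z0 z1 z2 z3 = 10740600 * z0^2 + 8910720 * z1^2 + 4422600 * z2^2 + 48157200 * z3^2 + 7862400 * z0 * z1 + 3931200 * z0 * z2 + 34398000 * z0 * z3 + 3931200 * z1 * z2 + 22604400 * z1 * z3 + 8845200 * z2 * z3"

lemma QL11_sos: "1000000 * QL11 z0 z1 z2 z3 = 867206280 * (100 * z0 + 45 * z1 + 23 * z2 + 198 * z3)^2 + 506010007 * (100 * z1 + 21 * z2 + 69 * z3)^2 + 168034974 * (100 * z2 + (-13) * z3)^2 + 9521005420000 * (z3)^2 + 1982475360000 * (z0)^2 + 28771740000 * (z0 + z1)^2 + 28974444000 * (z0 - z2)^2 + 28315656000 * (z0 + z3)^2 + 1976411990600 * (z1)^2 + 5420485500 * (z1 + z2)^2 + 83922996900 * (z1 + z3)^2 + 1984532362230 * (z2)^2 + 41420433063 * (z2 - z3)^2 + 2047068938984 * (z3)^2"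
  unfolding QL11_def by algebra

lemma QL11_nonneg: "0 \<le> QL11 z0 z1 z2 z3"
proof -
  have "0 \<le> 1000000 * QL11 z0 z1 z2 z3"
    unfolding QL11_sos by (intro add_nonneg_nonneg mult_nonneg_nonneg) simp_all
  then show ?thesis by simp
qed

definition QL12 :: "real \<Rightarrow> real \<Rightarrow> real \<Rightarrow> real \<Rightarrow> real \<Rightarrow> real \<Rightarrow> real \<Rightarrow> real" where
  "QL12 z0 z1 z2 z3 z4 z5 z6 = 14054040 * z0^2 + 14054040 * z1^2 + 3767400 * z2^2 + 6458400 * z3^2 + 51400440 * z4^2 + 6458400 * z5^2 + 51400440 * z6^2 + 17600310 * z0 * z1 + 1474200 * z0 * z2 - (6940440) * z0 * z3 + 35431760 * z0 * z4 - (7720440) * z0 * z5 + 40547520 * z0 * z6 + 1474200 * z1 * z2 - (7720440) * z1 * z3 + 40547520 * z1 * z4 - (6940440) * z1 * z5 + 35431760 * z1 * z6 - (931840) * z2 * z3 + 7174440 * z2 * z4 - (931840) * z2 * z5 + 7174440 * z2 * z6 - (12555270) * z3 * z4 + 2827440 * z3 * z5 - (16746912) * z3 * z6 - (16746912) * z4 * z5 + 74643660 * z4 * z6 - (12555270) * z5 * z6"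

lemma QL12_sos: "1000000 * QL12 z0 z1 z2 z3 z4 z5 z6 = 1226480659 * (100 * z0 + 72 * z1 + 6 * z2 + (-28) * z3 + 144 * z4 + (-31) * z5 + 165 * z6)^2 + 595058325 * (100 * z1 + 3 * z2 + (-23) * z3 + 127 * z4 + (-12) * z5 + 53 * z6)^2 + 192658174 * (100 * z2 + (-11) * z3 + 117 * z4 + (-11) * z5 + 117 * z6)^2 + 1339594332 * (50 * z3 + 11 * z4 + 2 * z5 + (-25) * z6)^2 + 29022490600 * (20 * z4 + (-3) * z5 + 3 * z6)^2 + 1238745636 * (50 * z5 + 17 * z6)^2 + 10334584620000 * (z6)^2 + 1571924311800 * (z0)^2 + 30505744800 * (z0 - z1)^2 + 1211604600 * (z0 + z2)^2 + 36074154800 * (z0 - z3)^2 + 54558510400 * (z0 + z4)^2 + 58129957100 * (z0 - z5)^2 + 36829126500 * (z0 + z6)^2 + 1639599236656 * (z1)^2 + 28742857812 * (z1 + z2)^2 + 19000843956 * (z1 - z3)^2 + 367799988 * (z1 + z4)^2 + 18645179112 * (z1 - z5)^2 + 8519351420 * (z1 - z6)^2 + 1679006138036 * (z2)^2 + 6888233463 * (z2 - z3)^2 + 46722852999 * (z2 + z4)^2 + 4448506326 * (z2 - z5)^2 + 24289238115 * (z2 + z6)^2 + 1577744289556 * (z3)^2 + 83125428249 * (z3 - z4)^2 + 27627618034 * (z3 + z5)^2 + 59295272307 * (z3 - z6)^2 + 1580480603068 * (z4)^2 + 31748020290 * (z4 - z5)^2 + 165053217999 * (z4 + z6)^2 +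 1564197962080 * (z5)^2 + 102529923177 * (z5 - z6)^2 + 1513140368692 * (z6)^2"
  unfolding QL12_def by algebra

lemma QL12_nonneg: "0 \<le> QL12 z0 z1 z2 z3 z4 z5 z6"
proof -
  have "0 \<le> 1000000 * QL12 z0 z1 z2 z3 z4 z5 z6"
    unfolding QL12_sos by (intro add_nonneg_nonneg mult_nonneg_nonneg) simp_all
  then show ?thesis by simp
qed

definition QL13 :: "real \<Rightarrow> real \<Rightarrow> real \<Rightarrow> real \<Rightarrow> real" where
  "QL13 z0 z1 z2 z3 = 4520880 * z0^2 + 5405400 * z1^2 + 28009800 * z2^2 + 4914000 * z3^2 - (1965600) * z0 * z1 + 10810800 * z0 * z2 - (10810800) * z1 * z2 + 982800 * z1 * z3 - (2948400) * z2 * z3"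

lemma QL13_sos: "250000 * QL13 z0 z1 z2 z3 = 257222733 * (50 * z0 + (-19) * z1 + 105 * z2)^2 + 1232495124 * (25 * z1 + (-27) * z2 + 4 * z3)^2 + 4432511892 * (25 * z2 + (-2) * z3)^2 + 701745645000 * (z3)^2 + 484894112100 * (z0)^2 + 1338403650 * (z0 - z1)^2 + 930651750 * (z0 + z2)^2 + 480188785872 * (z1)^2 + 6256438965 * (z1 - z2)^2 + 399512400 * (z1 - z3)^2 + 476758468056 * (z2)^2 + 13814932008 * (z2 - z3)^2 + 475089941040 * (z3)^2"
  unfolding QL13_def by algebra

lemma QL13_nonneg: "0 \<le> QL13 z0 z1 z2 z3"
proof -
  have "0 \<le> 250000 * QL13 z0 z1 z2 z3"
    unfolding QL13_sos by (intro add_nonneg_nonneg mult_nonneg_nonneg) simp_all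
  then show ?thesis by simp
qed

definition QL14 :: "real \<Rightarrow> real \<Rightarrow> real \<Rightarrow> real \<Rightarrow> real" where
  "QL14 z0 z1 z2 z3 = 5405400 * z0^2 + 4520880 * z1^2 + 4914000 * z2^2 + 28009800 * z3^2 - (1965600) * z0 * z1 + 982800 * z0 * z2 - (10810800) * z0 * z3 + 10810800 * z1 * z3 - (2948400) * z2 * z3"

lemma QL14_sos: "1000000 * QL14 z0 z1 z2 z3 = 1382698932 * (50 * z0 + (-14) * z1 + 7 * z2 + (-78) * z3)^2 + 229280400 * (100 * z1 + 6 * z2 + 169 * z3)^2 + 288697819 * (100 * z2 + (-33) * z3)^2 + 10774227300000 * (z3)^2 + 1913412383400 * (z0)^2 + 14910747600 * (z0 - z1)^2 + 7455373800 * (z0 + z2)^2 + 12874165200 * (z0 - z3)^2 + 1919438510808 * (z1)^2 + 2063744664 * (z1 - z2)^2 + 20654006256 * (z1 + z3)^2 + 1940530255496 * (z2)^2 + 966093972 * (z2 + z3)^2 + 1925868702993 * (z3)^2"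
  unfolding QL14_def by algebra

lemma QL14_nonneg: "0 \<le> QL14 z0 z1 z2 z3"
proof -
  have "0 \<le> 1000000 * QL14 z0 z1 z2 z3"
    unfolding QL14_sos by (intro add_nonneg_nonneg mult_nonneg_nonneg) simp_all
  then show ?thesis by simp
qed

definition QL15 :: "real \<Rightarrow> real \<Rightarrow> real \<Rightarrow> real \<Rightarrow> real" where
  "QL15 z0 z1 z2 z3 = 3046680 * z0^2 + 3046680 * z1^2 + 7567560 * z2^2 + 7567560 * z3^2 + 131040 * z0 * z2 + 982800 * z0 * z3 + 982800 * z1 * z2 + 131040 * z1 * z3 - (1965600) * z2 * z3"

lemma QL15_sos: "1000000 * QL15 z0 z1 z2 z3 = 127002761 * (100 * z0 + 5 * z2 + 39 * z3)^2 + 127002761 * (100 * z1 + 39 * z2 + 5 * z3)^2 + 2238957852 * (50 * z2 + (-9) * z3)^2 + 5406568960000 * (z3)^2 + 1770723002600 * (z0)^2 + 2018619500 * (z0 + z2)^2 + 3910767900 * (z0 - z3)^2 + 1770723002600 * (z1)^2 + 3910767900 * (z1 - z2)^2 + 2018619500 * (z1 + z3)^2 + 1743089670704 * (z2)^2 + 24800043390 * (z2 - z3)^2 + 1752559754692 * (z3)^2"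
  unfolding QL15_def by algebra

lemma QL15_nonneg: "0 \<le> QL15 z0 z1 z2 z3"
proof -
  have "0 \<le> 1000000 * QL15 z0 z1 z2 z3"
    unfolding QL15_sos by (intro add_nonneg_nonneg mult_nonneg_nonneg) simp_all
  then show ?thesis by simp
qed

lemma id_L:
  fixes a b u v :: real
  shows "4914000 * FA (1 + a) (1 + b) (1 + u) (1 + v) + 10958220 * FB (1 + a) (1 + b) (1 + u) (1 + v) - 2457000 * (a^2 + b^2 + u^2 + v^2) =
    QL0 (v) (u) (u*v) (b) (b*v) (b*u) (b*u*v) (b^2) (b^2*u) (a) (a*v) (a*u) (a*u*v) (a*b) (a^2) (a^2*v) +
    (1 + v) * QL1 (v) (u) (u*v) (b) (b*u) (a) (a*v) (a*u) (a*b) (a^2) +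
    (1 + u) * QL2 (v) (u) (u*v) (b) (b*v) (b*u) (b^2) (a) (a*v) (a*b) +
    (1 + u) * (1 + v) * QL3 (v) (u) (u*v) (b) (b*u) (a) (a*v) (a*b) +
    b * QL4 (v) (u) (u*v) (b) (b*u) (a) (a*v) (a*u) (a*b) (a^2) +
    b * (1 + v) * QL5 (v) (u) (u*v) (b) (b*u) (a) (a*u) +
    b * (1 + u) * QL6 (v) (u) (u*v) (b) (a) (a*v) +
    b * (1 + u) * (1 + v) * QL7 (v) (u) (b) (a) +
    a * QL8 (v) (u) (u*v) (b) (b*v) (b*u) (b^2) (a) (a*v) (a*b) +
    a * (1 + v) * QL9 (v) (u) (u*v) (b) (b*u) (a) +
    a * (1 + u) * QL10 (v) (u) (u*v) (b) (b*v) (a) (a*v) +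
    a * (1 + u) * (1 + v) * QL11 (v) (u) (b) (a) +
    a * b * QL12 (v) (u) (u*v) (b) (b*u) (a) (a*v) +
    a * b * (1 + v) * QL13 (v) (u) (b) (a) +
    a * b * (1 + u) * QL14 (v) (u) (b) (a) +
    a * b * (1 + u) * (1 + v) * QL15 (v) (u) (b) (a)"
  unfolding FA_def FB_def QL0_def QL1_def QL2_def QL3_def QL4_def QL5_def QL6_def QL7_def QL8_def QL9_def QL10_def QL11_def QL12_def QL13_def QL14_def QL15_def by algebra

lemma pos_L:
  fixes a b u v :: real
  assumes hu: "0 \<le> 1 + u" and hv: "0 \<le> 1 + v" and ha: "0 \<le> a" and hb: "0 \<le> b"
  shows "0 \<le> 4914000 * FA (1 + a) (1 + b) (1 + u) (1 + v) + 10958220 * FB (1 + a) (1 + b) (1 + u) (1 + v) - 2457000 * (a^2 + b^2 + u^2 + v^2)"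
  unfolding id_L by (intro hu hv ha hb add_nonneg_nonneg mult_nonneg_nonneg QL0_nonneg QL1_nonneg QL2_nonneg QL3_nonneg QL4_nonneg QL5_nonneg QL6_nonneg QL7_nonneg QL8_nonneg QL9_nonneg QL10_nonneg QL11_nonneg QL12_nonneg QL13_nonneg QL14_nonneg QL15_nonneg)

definition QH0 :: "real \<Rightarrow> real \<Rightarrow> real \<Rightarrow> real \<Rightarrow> real \<Rightarrow> real \<Rightarrow> real \<Rightarrow> real \<Rightarrow> real \<Rightarrow> real \<Rightarrow> real \<Rightarrow> real \<Rightarrow> real \<Rightarrow> real \<Rightarrow> real \<Rightarrow> real \<Rightarrow> real" where
  "QH0 z0 z1 z2 z3 z4 z5 z6 z7 z8 z9 z10 z11 z12 z13 z14 z15 = 80294760 * z0^2 + 80294760 * z1^2 + 17493840 * z2^2 + 162653400 * z3^2 + 11203920 * z4^2 + 98614152 * z5^2 + 10417680 * z6^2 + 21425040 * z7^2 + 51498720 * z8^2 + 162653400 * z9^2 + 98614152 * z10^2 + 11203920 * z11^2 + 10417680 * z12^2 + 83696760 * z13^2 + 21425040 * z14^2 + 51498720 * z15^2 + 94545360 * z0 * z1 + 60147360 * z0 * z2 - (201080880) * z0 * z3 + 45077760 * z0 * z4 + 19754280 * z0 * z5 + 14054040 * z0 * z6 - (48124440) * z0 * z7 - (19983600) * z0 * z8 - (89238240) * z0 * z9 + 138181680 * z0 * z10 + 32530680 * z0 * z11 + 22768200 * z0 * z12 - (138928608) * z0 * z13 + 4946760 * z0 * z14 + 72412704 * z0 *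 z15 + 60147360 * z1 * z2 - (89238240) * z1 * z3 + 32530680 * z1 * z4 + 138181680 * z1 * z5 + 22768200 * z1 * z6 + 4946760 * z1 * z7 + 72412704 * z1 * z8 - (201080880) * z1 * z9 + 19754280 * z1 * z10 + 45077760 * z1 * z11 + 14054040 * z1 * z12 - (138928608) * z1 * z13 - (48124440) * z1 * z14 - (19983600) * z1 * z15 - (68697720) * z2 * z3 + 19950840 * z2 * z4 + 40458600 * z2 * z5 + 9762480 * z2 * z6 - (9172800) * z2 * z7 + 14185080 * z2 * z8 - (68697720) * z2 * z9 + 40458600 * z2 * z10 + 19950840 * z2 * z11 + 9762480 * z2 * z12 - (65176020) * z2 * z13 - (9172800) * z2 * z14 + 14185080 * z2 * z15 - (43210440) * z3 * z4 + 46224360 * z3 * z5 - (10155600) * z3 * z6 + 98673120 * z3 * z7 + 84651840 * z3 * z8 + 50712480 * z3 * z9 - (216569808) * z3 * z10 - (34751808) * z3 * z11 - (23898420) * z3 * z12 + 172692000 * z3 * z13 - (28782000) * z3 * z14 - (127829520) * z3 * z15 + 22276800 * z4 * z5 + 7076160 * z4 * z6 - (4226040) * z4 * z7 + 8894340 * z4 * z8 - (34751808) * z4 * z9 + 38273040 * z4 * z10 + 12465180 * z4 * z11 + 8157240 * z4 * z12 - (38418120) * z4 * z13 - (65520) * z4 * z14 + 18869760 * z4 * z15 + 25978680 * z5 * z6 + 55167840 * z5 * z7 + 131695200 * z5 * z8 - (216569808) * z5 * z9 - (72055620) * z5 * z10 + 38273040 * z5 * z11 + 5208840 * z5 * z12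 - (82620720) * z5 * z13 - (68884920) * z5 * z14 - (79490320) * z5 * z15 + 3980340 * z6 * z7 + 13857480 * z6 * z8 - (23898420) * z6 * z9 + 5208840 * z6 * z10 + 8157240 * z6 * z11 + 1965600 * z6 * z12 - (16591120) * z6 * z13 - (2831920) * z6 * z14 + 1867320 * z6 * z15 + 53267760 * z7 * z8 - (28782000) * z7 * z9 - (68884920) * z7 * z10 - (65520) * z7 * z11 - (2831920) * z7 * z12 + 31590000 * z7 * z13 - (19338480) * z7 * z14 - (47194056) * z7 * z15 - (127829520) * z8 * z9 - (79490320) * z8 * z10 + 18869760 * z8 * z11 + 1867320 * z8 * z12 - (22678110) * z8 * z13 - (47194056) * z8 * z14 - (69926220) * z8 * z15 + 46224360 * z9 * z10 - (43210440) * z9 * z11 - (10155600) * z9 * z12 + 172692000 * z9 * z13 + 98673120 * z9 * z14 + 84651840 * z9 * z15 + 22276800 * z10 * z11 + 25978680 * z10 * z12 - (82620720) * z10 * z13 + 55167840 * z10 * z14 + 131695200 * z10 * z15 + 7076160 * z11 * z12 - (38418120) * z11 * z13 - (4226040) * z11 * z14 + 8894340 * z11 * z15 - (16591120) * z12 * z13 + 3980340 * z12 * z14 + 13857480 * z12 * z15 + 31590000 * z13 * z14 - (22678110) * z13 * z15 + 53267760 * z14 * z15"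

lemma QH0_sos: "100000000 * QH0 z0 z1 z2 z3 z4 z5 z6 z7 z8 z9 z10 z11 z12 z13 z14 z15 = 7965706773 * (1000 * z0 + 593 * z1 + 378 * z2 + (-1262) * z3 + 283 * z4 + 124 * z5 + 88 * z6 + (-302) * z7 + (-125) * z8 + (-560) * z9 + 867 * z10 + 204 * z11 + 143 * z12 + (-872) * z13 + 31 * z14 + 455 * z15)^2 + 5160298116 * (1000 * z1 + 237 * z2 + 292 * z3 + 56 * z4 + 1225 * z5 + 140 * z6 + 325 * z7 + 817 * z8 + (-1435) * z9 + (-603) * z10 + 250 * z11 + 5 * z12 + (-547) * z13 + (-495) * z14 + (-610) * z15)^2 + 260533191 * (1000 * z2 + 17 * z3 + 300 * z4 + 583 * z5 + 199 * z6 + 203 * z7 + 338 * z8 + 17 * z9 + 583 * z10 + 300 * z11 + 199 * z12 + 126 * z13 + 203 * z14 + 338 * z15)^2 + 3072875020 * (1000 * z3 + 195 * z4 + 557 * z5 + 55 * z6 + 458 * z7 + 567 * z8 + (-305) * z9 + (-392) * z10 + (-20) * z11 + 76 * z12 + 225 * z13 + (-125) * z14 + (-295) * z15)^2 + 262627246 * (1000 * z4 + 386 * z5 + 252 * z6 + 326 * z7 + 479 * z8 + 460 * z9 + 1225 * z10 + 303 * z11 + 88 * z12 + 223 * z13 + 489 * z14 + 934 * z15)^2 + 846659024 * (1000 * z5 + 211 * z6 + 185 * z7 + 562 * z8 + (-860) * z9 + (-222) * z10 + 108 * z11 + (-98) * z12 + (-278) * z13 + (-252) * z14 + (-246) * z15)^2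 + 741267603 * (1000 * z6 + 47 * z7 + (-71) * z8 + 550 * z9 + 108 * z10 + 44 * z11 + (-23) * z12 + 228 * z13 + 292 * z14 + 307 * z15)^2 + 94355151 * (1000 * z7 + 550 * z8 + 1285 * z9 + 1053 * z10 + 400 * z11 + 898 * z12 + 973 * z13 + 940 * z14 + 1062 * z15)^2 + 143567468 * (1000 * z8 + (-423) * z9 + (-232) * z10 + (-27) * z11 + 362 * z12 + (-247) * z13 + (-136) * z14 + (-195) * z15)^2 + 1700663232 * (1000 * z9 + 499 * z10 + 325 * z11 + 47 * z12 + 262 * z13 + 474 * z14 + 534 * z15)^2 + 386640291 * (1000 * z10 + 33 * z11 + 587 * z12 + (-72) * z13 + 243 * z14 + 525 * z15)^2 + 146892578 * (1000 * z11 + 275 * z12 + 171 * z13 + 171 * z14 + 285 * z15)^2 + 2134157996 * (500 * z12 + 13 * z13 + (-4) * z14 + (-44) * z15)^2 + 205553322 * (1000 * z13 + 197 * z14 + (-24) * z15)^2 + 1053353424 * (250 * z14 + 149 * z15)^2 + 130678995000000 * (z15)^2 + 38323574733000 * (z0)^2 + 3603883611000 * (z0 + z1)^2 + 3669160194000 * (z0 - z2)^2 + 1322052474000 * (z0 - z3)^2 + 407016759000 * (z0 - z4)^2 + 33639852000 * (z0 - z5)^2 + 1719803976000 * (z0 + z6)^2 + 578554554000 * (z0 - z7)^2 + 3466653375000 * (z0 - z8)^2 + 1116207120000 * (z0 - z9)^2 + 2816227809000 * (z0 + z10)^2 + 1529818308000 * (z0 + z11)^2 + 686068539000 * (z0 -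 z12)^2 + 334093944000 * (z0 - z13)^2 + 401090037000 * (z0 + z14)^2 + 3761381715000 * (z0 - z15)^2 + 28311916069215 * (z1)^2 + 1167689487042 * (z1 - z2)^2 + 7454934989082 * (z1 - z3)^2 + 760360565913 * (z1 + z4)^2 + 1984457467764 * (z1 + z5)^2 + 285821517768 * (z1 + z6)^2 + 3212324550522 * (z1 - z7)^2 + 4870346223375 * (z1 - z8)^2 + 3764298362160 * (z1 - z9)^2 + 3956975038737 * (z1 + z10)^2 + 185991256644 * (z1 + z11)^2 + 1416540776373 * (z1 + z12)^2 + 4712221056792 * (z1 - z13)^2 + 1691979811941 * (z1 + z14)^2 + 665322196995 * (z1 - z15)^2 + 37497183168270 * (z2)^2 + 3500561098164 * (z2 + z3)^2 + 1228950230454 * (z2 - z4)^2 + 493008744756 * (z2 - z5)^2 + 87933405048 * (z2 + z6)^2 + 333022220688 * (z2 + z7)^2 + 1609937436714 * (z2 - z8)^2 + 1857333222660 * (z2 + z9)^2 + 2066704185522 * (z2 - z10)^2 + 617201352576 * (z2 - z11)^2 + 415372184202 * (z2 - z12)^2 + 2972109083292 * (z2 + z13)^2 + 509983739526 * (z2 + z14)^2 + 2803827816150 * (z2 - z15)^2 + 24492313509426 * (z3)^2 + 522231817074 * (z3 - z4)^2 + 2256645195977 * (z3 - z5)^2 + 3982965484945 * (z3 - z6)^2 + 254178563393 * (z3 - z7)^2 + 1123236758340 * (z3 + z8)^2 + 5519412959561 * (z3 + z9)^2 + 2190957038143 * (z3 - z10)^2 + 3408104046796 * (z3 - z11)^2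 + 664317941705 * (z3 + z12)^2 + 894976442190 * (z3 + z13)^2 + 1614147517805 * (z3 + z14)^2 + 6665893730764 * (z3 + z15)^2 + 54717655428031 * (z4)^2 + 390725194916 * (z4 - z5)^2 + 280819211568 * (z4 + z6)^2 + 343752214082 * (z4 - z7)^2 + 1559025296057 * (z4 - z8)^2 + 118355367200 * (z4 + z9)^2 + 1036102323935 * (z4 + z10)^2 + 98812807164 * (z4 + z11)^2 + 152107816117 * (z4 - z12)^2 + 326915477140 * (z4 - z13)^2 + 494452242591 * (z4 + z14)^2 + 885226788685 * (z4 - z15)^2 + 43453245564746 * (z5)^2 + 1534056195835 * (z5 - z6)^2 + 2174479238631 * (z5 - z7)^2 + 2518903834818 * (z5 - z8)^2 + 3244775862441 * (z5 - z9)^2 + 1208525247403 * (z5 - z10)^2 + 1680775967576 * (z5 - z11)^2 + 1331699033649 * (z5 + z12)^2 + 3414826405522 * (z5 - z13)^2 + 1110804756445 * (z5 + z14)^2 + 733362792578 * (z5 - z15)^2 + 43392813336260 * (z6)^2 + 1474688005611 * (z6 - z7)^2 + 2559445177958 * (z6 - z8)^2 + 492830441907 * (z6 + z9)^2 + 2876979248873 * (z6 + z10)^2 + 114922603916 * (z6 + z11)^2 + 2306833047 * (z6 - z12)^2 + 1787622117850 * (z6 - z13)^2 + 1088851085769 * (z6 + z14)^2 + 2005453164154 * (z6 + z15)^2 + 41348636880774 * (z7)^2 + 1823591498597 * (z7 - z8)^2 + 3636248237089 * (z7 + z9)^2 + 367584523595 * (z7 + z10)^2 + 1650938410628 * (z7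 - z11)^2 + 426197600006 * (z7 + z12)^2 + 527436890454 * (z7 + z13)^2 + 1737474228871 * (z7 + z14)^2 + 2858725965345 * (z7 + z15)^2 + 24358880225233 * (z8)^2 + 5072841453974 * (z8 + z9)^2 + 1480744251803 * (z8 - z10)^2 + 3020868637734 * (z8 - z11)^2 + 509283150466 * (z8 + z12)^2 + 2039121503872 * (z8 + z13)^2 + 2483386686287 * (z8 + z14)^2 + 1293203943574 * (z8 + z15)^2 + 31208103759547 * (z9)^2 + 537296688404 * (z9 - z10)^2 + 1904280509432 * (z9 + z11)^2 + 1950240932725 * (z9 - z12)^2 + 3692793849435 * (z9 + z13)^2 + 1556551446385 * (z9 - z14)^2 + 1330816023234 * (z9 + z15)^2 + 44248211050106 * (z10)^2 + 3308159799902 * (z10 + z11)^2 + 680801366350 * (z10 - z12)^2 + 611205181395 * (z10 - z13)^2 + 429885065958 * (z10 + z14)^2 + 1856960058573 * (z10 - z15)^2 + 42344837331024 * (z11)^2 + 455636234923 * (z11 + z12)^2 + 705493597746 * (z11 - z13)^2 + 1756291276781 * (z11 + z14)^2 + 1343507581561 * (z11 + z15)^2 + 52693085622279 * (z12)^2 + 549454432670 * (z12 - z13)^2 + 344197796285 * (z12 - z14)^2 + 1316114068495 * (z12 - z15)^2 + 37785964160525 * (z13)^2 + 178779338598 * (z13 - z14)^2 + 4369788271260 * (z13 + z15)^2 + 46647043391519 * (z14)^2 + 784731345462 * (z14 - z15)^2 + 26919335488821 * (z15)^2"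
  unfolding QH0_def by algebra

lemma QH0_nonneg: "0 \<le> QH0 z0 z1 z2 z3 z4 z5 z6 z7 z8 z9 z10 z11 z12 z13 z14 z15"
proof -
  have "0 \<le> 100000000 * QH0 z0 z1 z2 z3 z4 z5 z6 z7 z8 z9 z10 z11 z12 z13 z14 z15"
    unfolding QH0_sos by (intro add_nonneg_nonneg mult_nonneg_nonneg) simp_all
  then show ?thesis by simp
qed

definition QH1 :: "real \<Rightarrow> real \<Rightarrow> real \<Rightarrow> real \<Rightarrow> real \<Rightarrow> real \<Rightarrow> real \<Rightarrow> real \<Rightarrow> real \<Rightarrow> real \<Rightarrow> real" where
  "QH1 z0 z1 z2 z3 z4 z5 z6 z7 z8 z9 = 19939920 * z0^2 + 52088400 * z1^2 + 9369360 * z2^2 + 51597000 * z3^2 + 9336600 * z4^2 + 168550200 * z5^2 + 4717440 * z6^2 + 34398000 * z7^2 + 13759200 * z8^2 + 61916400 * z9^2 + 14742000 * z0 * z1 + 19874400 * z0 * z2 - (28501200) * z0 * z3 - (9828000) * z0 * z4 + 97297200 * z0 * z5 + 15331680 * z0 * z6 + 35380800 * z0 * z7 + 24570000 * z0 * z8 + 59950800 * z0 * z9 + 16707600 * z1 * z2 - (83538000) * z1 * z3 + 25552800 * z1 * z4 + 48157200 * z1 * z5 + 6879600 * z1 * z6 + 57985200 * z1 * z7 - (9828000) * z1 * z8 + 42260400 * z1 * z9 - (24570000) * z2 * z3 - (2948400) * z2 * z4 + 56019600 * z2 * z5 + 8845200 * z2 * z6 + 24570000 * z2 * z7 + 11793600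 * z2 * z8 + 35380800 * z2 * z9 - (11793600) * z3 * z4 - (114004800) * z3 * z5 - (14742000) * z3 * z6 - (72727200) * z3 * z7 - (6879600) * z3 * z8 - (75675600) * z3 * z9 - (28501200) * z4 * z5 - (3931200) * z4 * z6 + 3931200 * z4 * z7 - (13759200) * z4 * z8 - (12776400) * z4 * z9 + 48157200 * z5 * z6 + 124815600 * z5 * z7 + 73710000 * z5 * z8 + 197542800 * z5 * z9 + 17690400 * z6 * z7 + 11793600 * z6 * z8 + 29484000 * z6 * z9 + 18673200 * z7 * z8 + 79606800 * z7 * z9 + 42260400 * z8 * z9"

lemma QH1_sos: "100000000 * QH1 z0 z1 z2 z3 z4 z5 z6 z7 z8 z9 = 1936429847 * (1000 * z0 + 381 * z1 + 513 * z2 + (-736) * z3 + (-254) * z4 + 2512 * z5 + 396 * z6 + 914 * z7 + 634 * z8 + 1548 * z9)^2 + 4870701502 * (1000 * z1 + 94 * z2 + (-746) * z3 + 301 * z4 + 114 * z5 + 11 * z6 + 457 * z7 + (-197) * z8 + 200 * z9)^2 + 326523942 * (1000 * z2 + (-478) * z3 + (-100) * z4 + 773 * z5 + 135 * z6 + 342 * z7 + 151 * z8 + 427 * z9)^2 + 1266797684 * (1000 * z3 + 99 * z4 + (-1251) * z5 + (-89) * z6 + (-490) * z7 + (-104) * z8 + (-620) * z9)^2 + 295137445 * (1000 * z4 + (-593) * z5 + (-7) * z6 + 166 * z7 + (-236) * z8 + (-265) * z9)^2 + 8926030920 * (500 * z5 + 67 * z6 + 159 * z7 + 104 * z8 + 246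 * z9)^2 + 53943452 * (1000 * z6 + (-90) * z7 + 601 * z8 + 747 * z9)^2 + 173028269 * (1000 * z7 + 203 * z8 + 189 * z9)^2 + 3028863664 * (250 * z8 + 29 * z9)^2 + 152658724000000 * (z9)^2 + 53441140210000 * (z0)^2 + 679771707000 * (z0 - z1)^2 + 331488489000 * (z0 + z2)^2 + 152367392000 * (z0 + z3)^2 + 453181138000 * (z0 + z4)^2 + 548224336000 * (z0 + z5)^2 + 242219412000 * (z0 - z6)^2 + 856880158000 * (z0 - z7)^2 + 803477002000 * (z0 + z8)^2 + 53403156000 * (z0 - z9)^2 + 47000042316520 * (z1)^2 + 946964073691 * (z1 - z2)^2 + 350767531648 * (z1 - z3)^2 + 1045090088422 * (z1 - z4)^2 + 702757755984 * (z1 - z5)^2 + 1758506117972 * (z1 - z6)^2 + 981297754198 * (z1 - z7)^2 + 375820631762 * (z1 + z8)^2 + 3203387002436 * (z1 - z9)^2 + 53328490416592 * (z2)^2 + 265460874344 * (z2 + z3)^2 + 258552173794 * (z2 - z4)^2 + 990614622936 * (z2 + z5)^2 + 238888081424 * (z2 - z6)^2 + 363882807970 * (z2 - z7)^2 + 762218874062 * (z2 + z8)^2 + 279672709372 * (z2 + z9)^2 + 52388957052536 * (z3)^2 + 991783006924 * (z3 + z4)^2 + 470054465860 * (z3 - z5)^2 + 1068657865904 * (z3 + z6)^2 + 923094363524 * (z3 + z7)^2 + 888588988720 * (z3 - z8)^2 + 1217468607068 * (z3 + z9)^2 + 51789184833180 * (z4)^2 + 490371646344 * (z4 + z5)^2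 + 277243216750 * (z4 - z6)^2 + 258620353242 * (z4 - z7)^2 + 318801304250 * (z4 + z8)^2 + 737468926456 * (z4 - z9)^2 + 49881472440009 * (z5)^2 + 119132493067 * (z5 + z6)^2 + 2377628903114 * (z5 - z7)^2 + 2526745606878 * (z5 + z8)^2 + 1522496348041 * (z5 + z9)^2 + 51888627830265 * (z6)^2 + 1055985394172 * (z6 - z7)^2 + 581151965152 * (z6 + z8)^2 + 248980021801 * (z6 - z9)^2 + 45658500092698 * (z7)^2 + 385924077862 * (z7 + z8)^2 + 2404623274982 * (z7 - z9)^2 + 49765246183370 * (z8)^2 + 2077963731895 * (z8 + z9)^2 + 45918687430657 * (z9)^2"
  unfolding QH1_def by algebra

lemma QH1_nonneg: "0 \<le> QH1 z0 z1 z2 z3 z4 z5 z6 z7 z8 z9"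
proof -
  have "0 \<le> 100000000 * QH1 z0 z1 z2 z3 z4 z5 z6 z7 z8 z9"
    unfolding QH1_sos by (intro add_nonneg_nonneg mult_nonneg_nonneg) simp_all
  then show ?thesis by simp
qed

definition QH2 :: "real \<Rightarrow> real \<Rightarrow> real \<Rightarrow> real \<Rightarrow> real \<Rightarrow> real \<Rightarrow> real \<Rightarrow> real \<Rightarrow> real \<Rightarrow> real \<Rightarrow> real" where
  "QH2 z0 z1 z2 z3 z4 z5 z6 z7 z8 z9 = 52088400 * z0^2 + 19939920 * z1^2 + 9369360 * z2^2 + 168550200 * z3^2 + 34398000 * z4^2 + 4717440 * z5^2 + 61916400 * z6^2 + 51597000 * z7^2 + 9336600 * z8^2 + 13759200 * z9^2 + 14742000 * z0 * z1 + 16707600 * z0 * z2 + 48157200 * z0 * z3 + 57985200 * z0 * z4 + 6879600 * z0 * z5 + 42260400 * z0 * z6 - (83538000) * z0 * z7 + 25552800 * z0 * z8 - (9828000) * z0 * z9 + 19874400 * z1 * z2 + 97297200 * z1 * z3 + 35380800 * z1 * z4 + 15331680 * z1 * z5 + 59950800 * z1 * z6 - (28501200) * z1 * z7 - (9828000) * z1 * z8 + 24570000 * z1 * z9 + 56019600 * z2 * z3 + 24570000 * z2 * z4 + 8845200 * z2 * z5 + 35380800 * z2 * z6 - (24570000) * z2 * z7 - (2948400) * z2 * z8 + 11793600 * z2 * z9 + 124815600 * z3 * z4 + 48157200 * z3 * z5 + 197542800 * z3 * z6 - (114004800) * z3 * z7 - (28501200) * z3 * z8 + 73710000 * z3 *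 z9 + 17690400 * z4 * z5 + 79606800 * z4 * z6 - (72727200) * z4 * z7 + 3931200 * z4 * z8 + 18673200 * z4 * z9 + 29484000 * z5 * z6 - (14742000) * z5 * z7 - (3931200) * z5 * z8 + 11793600 * z5 * z9 - (75675600) * z6 * z7 - (12776400) * z6 * z8 + 42260400 * z6 * z9 - (11793600) * z7 * z8 - (6879600) * z7 * z9 - (13759200) * z8 * z9"

lemma QH2_sos: "100000000 * QH2 z0 z1 z2 z3 z4 z5 z6 z7 z8 z9 = 5151277847 * (1000 * z0 + 143 * z1 + 162 * z2 + 467 * z3 + 563 * z4 + 67 * z5 + 410 * z6 + (-811) * z7 + 248 * z8 + (-95) * z9)^2 + 1830957686 * (1000 * z1 + 477 * z2 + 2469 * z3 + 740 * z4 + 392 * z5 + 1472 * z6 + (-452) * z7 + (-368) * z8 + 709 * z9)^2 + 326523942 * (1000 * z2 + 773 * z3 + 342 * z4 + 135 * z5 + 427 * z6 + (-478) * z7 + (-100) * z8 + 151 * z9)^2 + 4317142028 * (1000 * z3 + 337 * z4 + 102 * z5 + 493 * z6 + (-367) * z7 + (-77) * z8 + 155 * z9)^2 + 219611234 * (1000 * z4 + (-17) * z5 + 147 * z6 + (-390) * z7 + 453 * z8 + 30 * z9)^2 + 58900802 * (1000 * z5 + 697 * z6 + 811 * z7 + 381 * z8 + 653 * z9)^2 + 158371535 * (1000 * z6 + (-161) * z7 + (-145) * z8 + 148 * z9)^2 + 608872592 * (1000 * z7 + 34 * z8 + 147 * z9)^2 + 14364616192 * (125 * z8 + (-27) * z9)^2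 + 186199041000000 * (z9)^2 + 48009492148000 * (z0)^2 + 467267879000 * (z0 + z1)^2 + 872988786000 * (z0 + z2)^2 + 2213245451000 * (z0 + z3)^2 + 909427861000 * (z0 - z4)^2 + 1155615749000 * (z0 - z5)^2 + 996082730000 * (z0 + z6)^2 + 786333917000 * (z0 + z7)^2 + 123093944000 * (z0 + z8)^2 + 2028604535000 * (z0 - z9)^2 + 53860729587814 * (z1)^2 + 1018681174398 * (z1 + z2)^2 + 217987365493 * (z1 + z3)^2 + 592915824123 * (z1 - z4)^2 + 505805964107 * (z1 - z5)^2 + 350866038390 * (z1 + z6)^2 + 57980177869 * (z1 - z7)^2 + 292489118008 * (z1 - z8)^2 + 331110177495 * (z1 + z9)^2 + 49904965421610 * (z2)^2 + 2519549344944 * (z2 + z3)^2 + 709920518238 * (z2 + z4)^2 + 92493880362 * (z2 - z5)^2 + 1870448689476 * (z2 + z6)^2 + 874568697102 * (z2 - z7)^2 + 326356211376 * (z2 - z8)^2 + 435978121932 * (z2 + z9)^2 + 49437615878170 * (z3)^2 + 67364481019 * (z3 - z4)^2 + 170040142079 * (z3 + z5)^2 + 323703418580 * (z3 + z6)^2 + 893914275645 * (z3 - z7)^2 + 406652417440 * (z3 - z8)^2 + 1636693805683 * (z3 + z9)^2 + 51124470676712 * (z4)^2 + 655216716179 * (z4 - z5)^2 + 375796047066 * (z4 - z6)^2 + 1063150891955 * (z4 + z7)^2 + 366872759036 * (z4 - z8)^2 + 410764155309 * (z4 - z9)^2 + 53155863840930 * (z5)^2 + 231457440386 * (z5 - z6)^2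 + 675302758655 * (z5 + z7)^2 + 462073498190 * (z5 - z8)^2 + 333047744537 * (z5 + z9)^2 + 52681141961574 * (z6)^2 + 168122950040 * (z6 - z7)^2 + 255655344204 * (z6 - z8)^2 + 623610139146 * (z6 + z9)^2 + 50683359017812 * (z7)^2 + 426119543491 * (z7 + z8)^2 + 697609267603 * (z7 + z9)^2 + 54038262158306 * (z8)^2 + 1223996854430 * (z8 - z9)^2 + 51545826111528 * (z9)^2"
  unfolding QH2_def by algebra

lemma QH2_nonneg: "0 \<le> QH2 z0 z1 z2 z3 z4 z5 z6 z7 z8 z9"
proof -
  have "0 \<le> 100000000 * QH2 z0 z1 z2 z3 z4 z5 z6 z7 z8 z9"
    unfolding QH2_sos by (intro add_nonneg_nonneg mult_nonneg_nonneg) simp_all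
  then show ?thesis by simp
qed

definition QH3 :: "real \<Rightarrow> real \<Rightarrow> real \<Rightarrow> real \<Rightarrow> real \<Rightarrow> real \<Rightarrow> real \<Rightarrow> real \<Rightarrow> real" where
  "QH3 z0 z1 z2 z3 z4 z5 z6 z7 = 11902800 * z0^2 + 11902800 * z1^2 + 786240 * z2^2 + 51105600 * z3^2 + 2751840 * z4^2 + 51105600 * z5^2 + 2751840 * z6^2 + 3439800 * z7^2 + 10810800 * z0 * z1 + 65520 * z0 * z2 + 14742000 * z0 * z3 + 1965600 * z0 * z4 - (7862400) * z0 * z5 + 3931200 * z0 * z6 + 5896800 * z0 * z7 + 65520 * z1 * z2 - (7862400) * z1 * z3 + 3931200 * z1 * z4 + 14742000 * z1 * z5 + 1965600 * z1 * z6 + 5896800 * z1 * z7 + 5896800 * z3 * z4 - (92383200) * z3 * z5 - (1965600) * z3 * z6 + 1965600 * z3 * z7 - (1965600) * z4 * z5 + 982800 * z4 * z7 + 5896800 * z5 * z6 + 1965600 * z5 * z7 + 982800 * z6 * z7"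

lemma QH3_sos: "100000000 * QH3 z0 z1 z2 z3 z4 z5 z6 z7 = 1143121793 * (1000 * z0 + 473 * z1 + 3 * z2 + 645 * z3 + 86 * z4 + (-344) * z5 + 172 * z6 + 258 * z7)^2 + 887520428 * (1000 * z1 + 2 * z2 + (-836) * z3 + 169 * z4 + 1040 * z5 + 6 * z6 + 175 * z7)^2 + 31453045 * (1000 * z2 + (-21) * z3 + (-18) * z4 + (-21) * z5 + (-18) * z6 + (-36) * z7)^2 + 15873249512 * (500 * z3 + 45 * z4 + (-453) * z5 + (-28) * z6 + 5 * z7)^2 + 162090085 * (1000 * z4 + 633 * z5 + 12 * z6 + (-37) * z7)^2 + 647604873 * (1000 * z5 + 241 * z6 + 118 * z7)^2 + 144415928 * (1000 * z6 + (-129) * z7)^2 + 181554936000000 * (z7)^2 + 46349935067000 * (z0)^2 + 156608089000 * (z0 - z1)^2 + 153365379000 * (z0 - z2)^2 + 213556485000 * (z0 - z3)^2 + 28474198000 * (z0 - z4)^2 + 113896792000 * (z0 + z5)^2 + 56948396000 * (z0 - z6)^2 + 85422594000 * (z0 - z7)^2 + 46417905206733 * (z1)^2 + 121130680267 * (z1 - z2)^2 + 97765590595 * (z1 + z3)^2 + 69139372346 * (z1 + z4)^2 + 78388062616 * (z1 + z5)^2 + 44939159308 * (z1 - z6)^2 + 24200213038 * (z1 + z7)^2 + 46683103744017 * (z2)^2 + 67492568839 * (z2 - z3)^2 + 28752517258 * (z2 - z4)^2 + 5826854864 * (z2 - z5)^2 + 34346280324 * (z2 - z6)^2 + 63098797582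 * (z2 - z7)^2 + 40890878669757 * (z3)^2 + 336532979168 * (z3 - z4)^2 + 1398768026315 * (z3 + z5)^2 + 1567474668418 * (z3 + z6)^2 + 1809561238750 * (z3 - z7)^2 + 45863140342734 * (z4)^2 + 508802944942 * (z4 + z5)^2 + 236019302492 * (z4 + z6)^2 + 66532569544 * (z4 - z7)^2 + 40111854980442 * (z5)^2 + 1714093962374 * (z5 - z6)^2 + 1513695985781 * (z5 + z7)^2 + 43140325920941 * (z6)^2 + 32160445682 * (z6 - z7)^2 + 43479348598886 * (z7)^2"
  unfolding QH3_def by algebra

lemma QH3_nonneg: "0 \<le> QH3 z0 z1 z2 z3 z4 z5 z6 z7"
proof -
  have "0 \<le> 100000000 * QH3 z0 z1 z2 z3 z4 z5 z6 z7"
    unfolding QH3_sos by (intro add_nonneg_nonneg mult_nonneg_nonneg) simp_all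
  then show ?thesis by simp
qed

definition QH4 :: "real \<Rightarrow> real \<Rightarrow> real \<Rightarrow> real \<Rightarrow> real \<Rightarrow> real \<Rightarrow> real \<Rightarrow> real \<Rightarrow> real \<Rightarrow> real \<Rightarrow> real" where
  "QH4 z0 z1 z2 z3 z4 z5 z6 z7 z8 z9 = 9271080 * z0^2 + 6191640 * z1^2 + 3407040 * z2^2 + 22800960 * z3^2 + 22113000 * z4^2 + 19024200 * z5^2 + 8452080 * z6^2 + 8648640 * z7^2 + 24570000 * z8^2 + 19656000 * z9^2 + 4029480 * z0 * z1 - (687960) * z0 * z2 - (1932840) * z0 * z3 + 5569200 * z0 * z4 - (16078608) * z0 * z5 + 11737440 * z0 * z6 - (2276820) * z0 * z7 - (9916920) * z0 * z8 - (13824720) * z0 * z9 + 163800 * z1 * z2 - (9795240) * z1 * z3 + 7547904 * z1 * z4 - (11164608) * z1 * z5 + 5585580 * z1 * z6 + 6823440 * z1 * z7 - (11859120) * z1 * z8 - (5985720) * z1 * z9 + 1638000 * z2 * z3 + 6322680 * z2 * z4 + 671580 * z2 * z5 - (1670760) * z2 * z6 + 294840 * z2 * z7 + 3064880 * z2 * z8 + 2082080 * z2 * z9 + 1113840 * z3 * z4 + 24289200 * z3 * z5 - (8934120) * z3 * z6 - (3013920) * z3 * z7 + 39452400 * z3 * z8 + 24887520 * z3 * z9 - (13824720) * z4 * z5 + 7978880 * z4 * z6 + 11007360 * z4 * z7 - (1056510) * z4 * z8 - (3950856) * z4 * z9 - (17755920) * z5 * z6 - (88920) * z5 * z7 + 32749920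 * z5 * z8 + 30607200 * z5 * z9 + 1099280 * z6 * z7 - (14761656) * z6 * z8 - (13832910) * z6 * z9 + 963144 * z7 * z8 + 9533160 * z7 * z9 + 34398000 * z8 * z9"

lemma QH4_sos: "1000000 * QH4 z0 z1 z2 z3 z4 z5 z6 z7 z8 z9 = 844213710 * (100 * z0 + 24 * z1 + (-4) * z2 + (-11) * z3 + 33 * z4 + (-95) * z5 + 70 * z6 + (-13) * z7 + (-59) * z8 + (-82) * z9)^2 + 488187368 * (100 * z1 + 3 * z2 + (-96) * z3 + 64 * z4 + (-75) * z5 + 29 * z6 + 75 * z7 + (-97) * z8 + (-28) * z9)^2 + 255857262 * (100 * z2 + 37 * z3 + 124 * z4 + 5 * z5 + (-25) * z6 - z7 + 58 * z8 + 31 * z9)^2 + 1705713210 * (100 * z3 + 16 * z4 + 45 * z5 + (-13) * z6 + 11 * z7 + 83 * z8 + 59 * z9)^2 + 1403312888 * (100 * z4 + (-24) * z5 + 16 * z6 + 23 * z7 + (-10) * z9)^2 + 355538012 * (100 * z5 + (-19) * z6 + 44 * z7 + 48 * z8 + 79 * z9)^2 + 218740958 * (100 * z6 + 13 * z7 + (-3) * z8 + 25 * z9)^2 + 320318185 * (100 * z7 + 34 * z8 + 87 * z9)^2 + 254290928 * (100 * z8 + 31 * z9)^2 + 1458071010000 * (z9)^2 + 638610105000 * (z0)^2 + 11372904000 * (z0 - z1)^2 + 6294516000 * (z0 - z2)^2 + 37784919000 * (z0 - z3)^2 + 1305243000 * (z0 - z4)^2 + 19273755000 * (z0 - z5)^2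 + 40775970000 * (z0 - z6)^2 + 40932177000 * (z0 - z7)^2 + 22400889000 * (z0 + z8)^2 + 10192422000 * (z0 + z9)^2 + 669130816560 * (z1)^2 + 16488305760 * (z1 + z2)^2 + 11851152240 * (z1 + z3)^2 + 19064413520 * (z1 - z4)^2 + 3908518800 * (z1 + z5)^2 + 41232400000 * (z1 - z6)^2 + 13709417520 * (z1 + z7)^2 + 1264082960 * (z1 + z8)^2 + 35477211680 * (z1 + z9)^2 + 732266349048 * (z2)^2 + 24219310656 * (z2 - z3)^2 + 6414186264 * (z2 + z4)^2 + 3097683000 * (z2 - z5)^2 + 1829307216 * (z2 - z6)^2 + 19264455480 * (z2 + z7)^2 + 8704031072 * (z2 - z8)^2 + 11988129832 * (z2 + z9)^2 + 542497697772 * (z3)^2 + 40221488334 * (z3 - z4)^2 + 24404584980 * (z3 + z5)^2 + 3806670438 * (z3 - z6)^2 + 20448676764 * (z3 + z7)^2 + 74184795858 * (z3 - z8)^2 + 12855369882 * (z3 + z9)^2 + 554763892610 * (z4)^2 + 58755264810 * (z4 + z5)^2 + 35875813972 * (z4 + z6)^2 + 26449448318 * (z4 + z7)^2 + 40783702730 * (z4 + z8)^2 + 6549634652 * (z4 - z9)^2 + 585302354734 * (z5)^2 + 42087454292 * (z5 + z6)^2 + 26202721886 * (z5 + z7)^2 + 60040849680 * (z5 - z8)^2 + 11890109780 * (z5 - z9)^2 + 482083605976 * (z6)^2 + 9965101972 * (z6 - z7)^2 + 80376226318 * (z6 + z8)^2 + 43651471428 * (z6 + z9)^2 + 691953894948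 * (z7)^2 + 11699534114 * (z7 + z8)^2 + 21818173450 * (z7 + z9)^2 + 301066130460 * (z8)^2 + 91729404598 * (z8 - z9)^2 + 544259622839 * (z9)^2"
  unfolding QH4_def by algebra

lemma QH4_nonneg: "0 \<le> QH4 z0 z1 z2 z3 z4 z5 z6 z7 z8 z9"
proof -
  have "0 \<le> 1000000 * QH4 z0 z1 z2 z3 z4 z5 z6 z7 z8 z9"
    unfolding QH4_sos by (intro add_nonneg_nonneg mult_nonneg_nonneg) simp_all
  then show ?thesis by simp
qed

definition QH5 :: "real \<Rightarrow> real \<Rightarrow> real \<Rightarrow> real \<Rightarrow> real \<Rightarrow> real \<Rightarrow> real \<Rightarrow> real" where
  "QH5 z0 z1 z2 z3 z4 z5 z6 = 3800160 * z0^2 + 10319400 * z1^2 + 1965600 * z2^2 + 13759200 * z3^2 + 54545400 * z4^2 + 3931200 * z5^2 + 8714160 * z6^2 + 1965600 * z0 * z1 + 1048320 * z0 * z2 + 4914000 * z0 * z3 + 7862400 * z0 * z4 + 982800 * z0 * z5 + 1965600 * z0 * z6 + 4914000 * z1 * z2 + 9828000 * z1 * z3 + 39312000 * z1 * z4 - (5896800) * z1 * z5 + 14742000 * z1 * z6 + 3931200 * z2 * z3 + 14742000 * z2 * z4 - (1965600) * z2 * z5 + 4914000 * z2 * z6 + 28501200 * z3 * z4 - (982800) * z3 * z5 + 5896800 * z3 * z6 - (13759200) * z4 * z5 + 35380800 * z4 * z6 - (4914000) * z5 * z6"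

lemma QH5_sos: "1000000 * QH5 z0 z1 z2 z3 z4 z5 z6 = 325493669 * (100 * z0 + 30 * z1 + 16 * z2 + 75 * z3 + 121 * z4 + 15 * z5 + 30 * z6)^2 + 947742873 * (100 * z1 + 24 * z2 + 44 * z3 + 195 * z4 + (-33) * z5 + 75 * z6)^2 + 77841421 * (100 * z2 + 72 * z3 + 290 * z4 + (-40) * z5 + 75 * z6)^2 + 912266953 * (100 * z3 + 17 * z4 + 8 * z5 + (-15) * z6)^2 + 645133003 * (100 * z4 + (-10) * z5 + 19 * z6)^2 + 3281958976 * (25 * z5 + 2 * z6)^2 + 1706373050000 * (z6)^2 + 502984820500 * (z0)^2 + 6318993000 * (z0 + z1)^2 + 3370129600 * (z0 + z2)^2 + 15797482500 * (z0 + z3)^2 + 7273394900 * (z0 - z4)^2 + 3159496500 * (z0 + z5)^2 + 6318993000 * (z0 + z6)^2 + 435734006250 * (z1)^2 + 26180143680 * (z1 + z2)^2 + 11570603550 * (z1 + z3)^2 + 6528041970 * (z1 - z4)^2 + 32679329850 * (z1 + z5)^2 + 30015849600 * (z1 - z6)^2 + 454595179484 * (z2)^2 + 13732892112 * (z2 + z3)^2 + 48006402176 * (z2 + z4)^2 + 1059558856 * (z2 + z5)^2 + 11015209980 * (z2 + z6)^2 + 465639364025 * (z3)^2 + 11071587095 * (z3 - z4)^2 + 12912004051 * (z3 + z5)^2 + 36544519950 * (z3 + z6)^2 + 317169699646 * (z4)^2 + 52379559512 * (z4 + z5)^2 + 38057075530 * (z4 - z6)^2 + 381347889362 * (z5)^2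 + 43665078755 * (z5 + z6)^2 + 329033352923 * (z6)^2"
  unfolding QH5_def by algebra

lemma QH5_nonneg: "0 \<le> QH5 z0 z1 z2 z3 z4 z5 z6"
proof -
  have "0 \<le> 1000000 * QH5 z0 z1 z2 z3 z4 z5 z6"
    unfolding QH5_sos by (intro add_nonneg_nonneg mult_nonneg_nonneg) simp_all
  then show ?thesis by simp
qed

definition QH6 :: "real \<Rightarrow> real \<Rightarrow> real \<Rightarrow> real \<Rightarrow> real \<Rightarrow> real \<Rightarrow> real" where
  "QH6 z0 z1 z2 z3 z4 z5 = 4422600 * z0^2 + 3734640 * z1^2 + 3931200 * z2^2 + 6388200 * z3^2 + 3439800 * z4^2 + 3931200 * z5^2 - (982800) * z0 * z1 + 3931200 * z0 * z3 - (1965600) * z0 * z4 + 3931200 * z0 * z5 + 1965600 * z1 * z4 - (982800) * z1 * z5 + 2948400 * z2 * z3 - (982800) * z3 * z4 + 1965600 * z3 * z5 - (1965600) * z4 * z5"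

lemma QH6_sos: "1000000 * QH6 z0 z1 z2 z3 z4 z5 = 319943844 * (100 * z0 + (-15) * z1 + 61 * z3 + (-31) * z4 + 61 * z5)^2 + 974401832 * (50 * z1 + 6 * z3 + 17 * z4 + (-4) * z5)^2 + 1083215376 * (50 * z2 + 27 * z3)^2 + 1247007488 * (50 * z3 + (-3) * z5)^2 + 163065249 * (100 * z4 + (-19) * z5)^2 + 1412369750000 * (z5)^2 + 1174766306400 * (z0)^2 + 11484234000 * (z0 - z1)^2 + 13942551600 * (z0 + z3)^2 + 9025916400 * (z0 + z4)^2 + 13942551600 * (z0 + z5)^2 + 1205180181760 * (z1)^2 + 428067660 * (z1 + z3)^2 + 5784555340 * (z1 + z4)^2 + 3771016340 * (z1 - z5)^2 + 1211302317600 * (z2)^2 + 11859242400 * (z2 + z3)^2 + 1212247353976 * (z3)^2 + 14224822140 * (z3 + z4)^2 + 2725723644 * (z3 + z5)^2 + 1189341159268 * (z4)^2 + 1702893320 * (z4 - z5)^2 + 1220496969979 * (z5)^2"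
  unfolding QH6_def by algebra

lemma QH6_nonneg: "0 \<le> QH6 z0 z1 z2 z3 z4 z5"
proof -
  have "0 \<le> 1000000 * QH6 z0 z1 z2 z3 z4 z5"
    unfolding QH6_sos by (intro add_nonneg_nonneg mult_nonneg_nonneg) simp_all
  then show ?thesis by simp
qed

definition QH7 :: "real \<Rightarrow> real \<Rightarrow> real \<Rightarrow> real \<Rightarrow> real" where
  "QH7 z0 z1 z2 z3 = 8386560 * z0^2 + 8845200 * z1^2 + 45700200 * z2^2 + 2948400 * z3^2 + 5896800 * z0 * z1 + 20638800 * z0 * z2 + 3931200 * z0 * z3 + 31449600 * z1 * z2 + 3931200 * z1 * z3 + 9828000 * z2 * z3"

lemma QH7_sos: "500000 * QH7 z0 z1 z2 z3 = 356571533 * (100 * z0 + 41 * z1 + 145 * z2 + 28 * z3)^2 + 1274218378 * (50 * z1 + 90 * z2 + 9 * z3)^2 + 4452378260000 * (z2)^2 + 471428495000 * (z3)^2 + 589120434400 * (z0)^2 + 12256714700 * (z0 + z1)^2 + 10587228500 * (z0 - z2)^2 + 15600292400 * (z0 - z3)^2 + 616743447996 * (z1)^2 + 8599535315 * (z1 + z2)^2 + 57610016 * (z1 + z3)^2 + 537652322900 * (z2)^2 + 22797310160 * (z2 - z3)^2 + 581552521934 * (z3)^2"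
  unfolding QH7_def by algebra

lemma QH7_nonneg: "0 \<le> QH7 z0 z1 z2 z3"
proof -
  have "0 \<le> 500000 * QH7 z0 z1 z2 z3"
    unfolding QH7_sos by (intro add_nonneg_nonneg mult_nonneg_nonneg) simp_all
  then show ?thesis by simp
qed

definition QH8 :: "real \<Rightarrow> real \<Rightarrow> real \<Rightarrow> real \<Rightarrow> real \<Rightarrow> real \<Rightarrow> real \<Rightarrow> real \<Rightarrow> real \<Rightarrow> real \<Rightarrow> real" where
  "QH8 z0 z1 z2 z3 z4 z5 z6 z7 z8 z9 = 6191640 * z0^2 + 9271080 * z1^2 + 3407040 * z2^2 + 19024200 * z3^2 + 8648640 * z4^2 + 8452080 * z5^2 + 19656000 * z6^2 + 22800960 * z7^2 + 22113000 * z8^2 + 24570000 * z9^2 + 4029480 * z0 * z1 + 163800 * z0 * z2 - (11164608) * z0 * z3 + 6823440 * z0 * z4 + 5585580 * z0 * z5 - (5985720) * z0 * z6 - (9795240) * z0 * z7 + 7547904 * z0 * z8 - (11859120) * z0 * z9 - (687960) * z1 * z2 - (16078608) * z1 * z3 - (2276820) * z1 * z4 + 11737440 * z1 * z5 - (13824720) * z1 * z6 - (1932840) * z1 * z7 + 5569200 * z1 * z8 - (9916920) * z1 * z9 + 671580 * z2 * z3 + 294840 * z2 * z4 - (1670760) * z2 * z5 + 2082080 * z2 * z6 + 1638000 * z2 * z7 + 6322680 * z2 * z8 + 3064880 * z2 * z9 - (88920) * z3 * z4 - (17755920) * z3 * z5 + 30607200 * z3 * z6 + 24289200 * z3 * z7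 - (13824720) * z3 * z8 + 32749920 * z3 * z9 + 1099280 * z4 * z5 + 9533160 * z4 * z6 - (3013920) * z4 * z7 + 11007360 * z4 * z8 + 963144 * z4 * z9 - (13832910) * z5 * z6 - (8934120) * z5 * z7 + 7978880 * z5 * z8 - (14761656) * z5 * z9 + 24887520 * z6 * z7 - (3950856) * z6 * z8 + 34398000 * z6 * z9 + 1113840 * z7 * z8 + 39452400 * z7 * z9 - (1056510) * z8 * z9"

lemma QH8_sos: "1000000 * QH8 z0 z1 z2 z3 z4 z5 z6 z7 z8 z9 = 536269710 * (100 * z0 + 38 * z1 + 2 * z2 + (-104) * z3 + 64 * z4 + 52 * z5 + (-56) * z6 + (-91) * z7 + 70 * z8 + (-111) * z9)^2 + 768520879 * (100 * z1 + (-5) * z2 + (-77) * z3 + (-31) * z4 + 63 * z5 + (-75) * z6 + 11 * z7 + 18 * z8 + (-36) * z9)^2 + 255857262 * (100 * z2 + 5 * z3 - z4 + (-25) * z5 + 31 * z6 + 37 * z7 + 124 * z8 + 58 * z9)^2 + 778332775 * (100 * z3 + 21 * z4 + (-28) * z5 + 99 * z6 + 99 * z7 + (-27) * z8 + 103 * z9)^2 + 454257554 * (100 * z4 + 17 * z5 + 71 * z6 + 6 * z7 + 88 * z8 + 38 * z9)^2 + 223257877 * (100 * z5 + 5 * z6 + (-4) * z7 + 32 * z8 + (-10) * z9)^2 + 266339829 * (100 * z6 + 87 * z7 + (-25) * z8 + 84 * z9)^2 + 745548334 * (100 * z7 + 69 * z8 + 55 * z9)^2 + 646831513 * (100 * z8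 + 11 * z9)^2 + 2180672560000 * (z9)^2 + 679897566000 * (z0)^2 + 23084898000 * (z0 - z1)^2 + 25353942000 * (z0 - z2)^2 + 5099016000 * (z0 - z3)^2 + 20406144000 * (z0 - z4)^2 + 4187508000 * (z0 + z5)^2 + 10250376000 * (z0 + z6)^2 + 17565639000 * (z0 - z7)^2 + 20064030000 * (z0 + z8)^2 + 23033781000 * (z0 + z9)^2 + 547432793160 * (z1)^2 + 476058460 * (z1 - z2)^2 + 2355337780 * (z1 - z3)^2 + 60203209820 * (z1 - z4)^2 + 32630484660 * (z1 - z5)^2 + 7271464620 * (z1 - z6)^2 + 42627690280 * (z1 + z7)^2 + 25215010800 * (z1 - z8)^2 + 70200801180 * (z1 + z9)^2 + 675237838830 * (z2)^2 + 23524930265 * (z2 + z3)^2 + 14757532925 * (z2 - z4)^2 + 9424817955 * (z2 - z5)^2 + 19749365695 * (z2 + z6)^2 + 12197866165 * (z2 + z7)^2 + 17200929090 * (z2 - z8)^2 + 29185997800 * (z2 + z9)^2 + 678040240090 * (z3)^2 + 57272310397 * (z3 + z4)^2 + 38404696541 * (z3 - z5)^2 + 2995215375 * (z3 - z6)^2 + 32547416897 * (z3 - z7)^2 + 279582846 * (z3 - z8)^2 + 37103597308 * (z3 - z9)^2 + 506195692543 * (z4)^2 + 55118919843 * (z4 - z5)^2 + 66308699462 * (z4 + z6)^2 + 2901242152 * (z4 - z7)^2 + 5600858395 * (z4 + z8)^2 + 38689942547 * (z4 + z9)^2 + 599110828558 * (z5)^2 + 27666427033 * (z5 - z6)^2 +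 24841401485 * (z5 - z7)^2 + 23340994070 * (z5 - z8)^2 + 3038369808 * (z5 + z9)^2 + 489746814708 * (z6)^2 + 83153597038 * (z6 - z7)^2 + 53147757085 * (z6 + z8)^2 + 57828104853 * (z6 - z9)^2 + 500894172103 * (z7)^2 + 48864048604 * (z7 - z8)^2 + 31483408277 * (z7 - z9)^2 + 578550381907 * (z8)^2 + 31828504397 * (z8 + z9)^2 + 454398684870 * (z9)^2"
  unfolding QH8_def by algebra

lemma QH8_nonneg: "0 \<le> QH8 z0 z1 z2 z3 z4 z5 z6 z7 z8 z9"
proof -
  have "0 \<le> 1000000 * QH8 z0 z1 z2 z3 z4 z5 z6 z7 z8 z9"
    unfolding QH8_sos by (intro add_nonneg_nonneg mult_nonneg_nonneg) simp_all
  then show ?thesis by simp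
qed

definition QH9 :: "real \<Rightarrow> real \<Rightarrow> real \<Rightarrow> real \<Rightarrow> real \<Rightarrow> real \<Rightarrow> real" where
  "QH9 z0 z1 z2 z3 z4 z5 = 3734640 * z0^2 + 4422600 * z1^2 + 3931200 * z2^2 + 3439800 * z3^2 + 3931200 * z4^2 + 6388200 * z5^2 - (982800) * z0 * z1 + 1965600 * z0 * z3 - (982800) * z0 * z4 - (1965600) * z1 * z3 + 3931200 * z1 * z4 + 3931200 * z1 * z5 + 2948400 * z2 * z5 - (1965600) * z3 * z4 - (982800) * z3 * z5 + 1965600 * z4 * z5"

lemma QH9_sos: "1000000 * QH9 z0 z1 z2 z3 z4 z5 = 251147844 * (100 * z0 + (-20) * z1 + 39 * z3 + (-20) * z4)^2 + 310329030 * (100 * z1 + (-25) * z3 + 60 * z4 + 63 * z5)^2 + 1083215376 * (50 * z2 + 27 * z5)^2 + 163068023 * (100 * z3 + (-19) * z4 + z5)^2 + 570054852 * (50 * z4 + (-7) * z5)^2 + 3089537250000 * (z5)^2 + 1198046775600 * (z0)^2 + 10895688000 * (z0 + z1)^2 + 3323408400 * (z0 + z3)^2 + 10895688000 * (z0 + z4)^2 + 1183178974320 * (z1)^2 + 11082106680 * (z1 - z3)^2 + 3166682400 * (z1 + z4)^2 + 10527111000 * (z1 + z5)^2 + 1211302317600 * (z2)^2 + 11859242400 * (z2 + z5)^2 + 1188242267416 * (z3)^2 + 11581892980 * (z3 - z4)^2 + 18938580050 * (z3 - z5)^2 + 1191533647480 * (z4)^2 + 12373757237 * (z4 + z5)^2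 + 1195508374368 * (z5)^2"
  unfolding QH9_def by algebra

lemma QH9_nonneg: "0 \<le> QH9 z0 z1 z2 z3 z4 z5"
proof -
  have "0 \<le> 1000000 * QH9 z0 z1 z2 z3 z4 z5"
    unfolding QH9_sos by (intro add_nonneg_nonneg mult_nonneg_nonneg) simp_all
  then show ?thesis by simp
qed

definition QH10 :: "real \<Rightarrow> real \<Rightarrow> real \<Rightarrow> real \<Rightarrow> real \<Rightarrow> real \<Rightarrow> real \<Rightarrow> real" where
  "QH10 z0 z1 z2 z3 z4 z5 z6 = 10319400 * z0^2 + 3800160 * z1^2 + 1965600 * z2^2 + 3931200 * z3^2 + 8714160 * z4^2 + 13759200 * z5^2 + 54545400 * z6^2 + 1965600 * z0 * z1 + 4914000 * z0 * z2 - (5896800) * z0 * z3 + 14742000 * z0 * z4 + 9828000 * z0 * z5 + 39312000 * z0 * z6 + 1048320 * z1 * z2 + 982800 * z1 * z3 + 1965600 * z1 * z4 + 4914000 * z1 * z5 + 7862400 * z1 * z6 - (1965600) * z2 * z3 + 4914000 * z2 * z4 + 3931200 * z2 * z5 + 14742000 * z2 * z6 - (4914000) * z3 * z4 - (982800) * z3 * z5 - (13759200) * z3 * z6 + 5896800 * z4 * z5 + 35380800 * z4 * z6 + 28501200 * z5 * z6"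

lemma QH10_sos: "1000000 * QH10 z0 z1 z2 z3 z4 z5 z6 = 977417669 * (100 * z0 + 10 * z1 + 25 * z2 + (-30) * z3 + 75 * z4 + 50 * z5 + 201 * z6)^2 + 315611550 * (100 * z1 + 9 * z2 + 25 * z3 + 8 * z4 + 62 * z5 + 62 * z6)^2 + 77841421 * (100 * z2 + (-40) * z3 + 75 * z4 + 72 * z5 + 290 * z6)^2 + 217580443 * (100 * z3 + (-3) * z4 + 33 * z5 + (-25) * z6)^2 + 215355498 * (100 * z4 + (-61) * z5 + 47 * z6)^2 + 809091830 * (100 * z5 + 29 * z6)^2 + 5433563100000 * (z6)^2 + 433054167900 * (z0)^2 + 5382331000 * (z0 + z1)^2 + 13455827500 * (z0 + z2)^2 + 16146993000 * (z0 - z3)^2 + 40367482500 * (z0 + z4)^2 + 26911655000 * (z0 + z5)^2 + 9904853100 * (z0 + z6)^2 + 508221092990 * (z1)^2 + 4244812250 * (z1 - z2)^2 + 4403574300 * (z1 - z3)^2 + 2752491750 * (z1 - z4)^2 + 11499555500 * (z1 + z5)^2 + 9798875310 * (z1 + z6)^2 + 472621530025 * (z2)^2 + 9383663000 * (z2 - z3)^2 + 17807181525 * (z2 + z4)^2 + 7258437650 * (z2 + z5)^2 + 25963759375 * (z2 + z6)^2 + 465486450650 * (z3)^2 + 22134158850 * (z3 - z4)^2 + 8303568420 * (z3 - z5)^2 + 28057767330 * (z3 - z6)^2 + 400403189781 * (z4)^2 + 41405740707 * (z4 + z5)^2 + 77745030450 * (z4 + z6)^2 + 434760405963 * (z5)^2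 + 39574529111 * (z5 + z6)^2 + 380312234768 * (z6)^2"
  unfolding QH10_def by algebra

lemma QH10_nonneg: "0 \<le> QH10 z0 z1 z2 z3 z4 z5 z6"
proof -
  have "0 \<le> 1000000 * QH10 z0 z1 z2 z3 z4 z5 z6"
    unfolding QH10_sos by (intro add_nonneg_nonneg mult_nonneg_nonneg) simp_all
  then show ?thesis by simp
qed

definition QH11 :: "real \<Rightarrow> real \<Rightarrow> real \<Rightarrow> real \<Rightarrow> real" where
  "QH11 z0 z1 z2 z3 = 8845200 * z0^2 + 8386560 * z1^2 + 2948400 * z2^2 + 45700200 * z3^2 + 5896800 * z0 * z1 + 3931200 * z0 * z2 + 31449600 * z0 * z3 + 3931200 * z1 * z2 + 20638800 * z1 * z3 + 9828000 * z2 * z3"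

lemma QH11_sos: "500000 * QH11 z0 z1 z2 z3 = 379503533 * (100 * z0 + 39 * z1 + 26 * z2 + 207 * z3)^2 + 29930551400 * (10 * z1 + 2 * z2 + 7 * z3)^2 + 471429330000 * (z2)^2 + 4452370385000 * (z3)^2 + 611114838600 * (z0)^2 + 5863778700 * (z0 - z1)^2 + 3909185800 * (z0 - z2)^2 + 6676866900 * (z0 + z3)^2 + 615679217054 * (z1)^2 + 627610462 * (z1 - z2)^2 + 829380091 * (z1 + z3)^2 + 617451545624 * (z2)^2 + 4515734206 * (z2 - z3)^2 + 657763729686 * (z3)^2"
  unfolding QH11_def by algebra

lemma QH11_nonneg: "0 \<le> QH11 z0 z1 z2 z3"
proof -
  have "0 \<le> 500000 * QH11 z0 z1 z2 z3"
    unfolding QH11_sos by (intro add_nonneg_nonneg mult_nonneg_nonneg) simp_all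
  then show ?thesis by simp
qed

definition QH12 :: "real \<Rightarrow> real \<Rightarrow> real \<Rightarrow> real \<Rightarrow> real \<Rightarrow> real \<Rightarrow> real \<Rightarrow> real" where
  "QH12 z0 z1 z2 z3 z4 z5 z6 = 14222520 * z0^2 + 14222520 * z1^2 + 1965600 * z2^2 + 4492800 * z3^2 + 51498720 * z4^2 + 4492800 * z5^2 + 51498720 * z6^2 + 20327580 * z0 * z1 - (687960) * z0 * z2 - (6968520) * z0 * z3 + 41394080 * z0 * z4 - (7927920) * z0 * z5 + 44422560 * z0 * z6 - (687960) * z1 * z2 - (7927920) * z1 * z3 + 44422560 * z1 * z4 - (6968520) * z1 * z5 + 41394080 * z1 * z6 + 116480 * z2 * z3 + 2850120 * z2 * z4 + 116480 * z2 * z5 + 2850120 * z2 * z6 - (10884510) * z3 * z4 + 2283120 * z3 * z5 - (14761656) * z3 * z6 - (14761656) * z4 * z5 + 82407780 * z4 * z6 - (10884510) * z5 * z6"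

lemma QH12_sos: "1000000 * QH12 z0 z1 z2 z3 z4 z5 z6 = 1350024526 * (100 * z0 + 75 * z1 + (-3) * z2 + (-26) * z3 + 153 * z4 + (-29) * z5 + 165 * z6)^2 + 584833781 * (100 * z1 - z2 + (-23) * z3 + 113 * z4 + (-9) * z5 + 68 * z6)^2 + 493330032 * (50 * z2 + (-2) * z3 + 83 * z4 + (-2) * z5 + 83 * z6)^2 + 256185339 * (100 * z3 + 59 * z4 + (-26) * z6)^2 + 724708911 * (100 * z4 + (-9) * z5 + (-5) * z6)^2 + 250265186 * (100 * z5 + 59 * z6)^2 + 7079605110000 * (z6)^2 + 442159253800 * (z0)^2 + 38606055000 * (z0 + z1)^2 + 61027357800 * (z0 + z2)^2 + 25803767600 * (z0 + z3)^2 + 41664752200 * (z0 + z4)^2 + 48888874600 * (z0 - z5)^2 + 64124679000 * (z0 - z6)^2 + 563373885950 * (z1)^2 + 18258896450 * (z1 + z2)^2 + 13705522000 * (z1 + z3)^2 + 111126838850 * (z1 + z4)^2 + 21606253050 * (z1 - z5)^2 + 13616779950 * (z1 + z6)^2 + 464671843288 * (z2)^2 + 11180086791 * (z2 - z3)^2 + 63487841887 * (z2 + z4)^2 + 15142634591 * (z2 - z5)^2 + 85771204678 * (z2 + z6)^2 + 563725905960 * (z3)^2 + 18524846459 * (z3 + z4)^2 + 607594601 * (z3 + z5)^2 + 73431916736 * (z3 + z6)^2 + 579616001729 * (z4)^2 + 61862417649 * (z4 - z5)^2 + 14549756996 * (z4 - z6)^2 + 546870378762 * (z5)^2 + 51753082201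 * (z5 - z6)^2 + 196155631892 * (z6)^2"
  unfolding QH12_def by algebra

lemma QH12_nonneg: "0 \<le> QH12 z0 z1 z2 z3 z4 z5 z6"
proof -
  have "0 \<le> 1000000 * QH12 z0 z1 z2 z3 z4 z5 z6"
    unfolding QH12_sos by (intro add_nonneg_nonneg mult_nonneg_nonneg) simp_all
  then show ?thesis by simp
qed

definition QH13 :: "real \<Rightarrow> real \<Rightarrow> real \<Rightarrow> real \<Rightarrow> real" where
  "QH13 z0 z1 z2 z3 = 4717440 * z0^2 + 4422600 * z1^2 + 27027000 * z2^2 + 3439800 * z3^2 - (2948400) * z0 * z1 + 13759200 * z0 * z2 - (982800) * z0 * z3 - (10810800) * z1 * z2 + 982800 * z1 * z3 - (2948400) * z2 * z3"

lemma QH13_sos: "500000 * QH13 z0 z1 z2 z3 = 2456147664 * (25 * z0 + (-12) * z1 + 56 * z2 + (-4) * z3)^2 + 413496604 * (50 * z1 + (-51) * z2 + 6 * z3)^2 + 391345299 * (100 * z2 - z3)^2 + 840344935000 * (z3)^2 + 822093505200 * (z0)^2 + 255700800 * (z0 - z1)^2 + 1193270400 * (z0 + z2)^2 + 85233600 * (z0 - z3)^2 + 817614024248 * (z1)^2 + 2247570408 * (z1 + z2)^2 + 3755930928 * (z1 + z3)^2 + 797363995344 * (z2)^2 + 21258432540 * (z2 - z3)^2 + 799879882265 * (z3)^2"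
  unfolding QH13_def by algebra

lemma QH13_nonneg: "0 \<le> QH13 z0 z1 z2 z3"
proof -
  have "0 \<le> 500000 * QH13 z0 z1 z2 z3"
    unfolding QH13_sos by (intro add_nonneg_nonneg mult_nonneg_nonneg) simp_all
  then show ?thesis by simp
qed

definition QH14 :: "real \<Rightarrow> real \<Rightarrow> real \<Rightarrow> real \<Rightarrow> real" where
  "QH14 z0 z1 z2 z3 = 4422600 * z0^2 + 4717440 * z1^2 + 3439800 * z2^2 + 27027000 * z3^2 - (2948400) * z0 * z1 + 982800 * z0 * z2 - (10810800) * z0 * z3 - (982800) * z1 * z2 + 13759200 * z1 * z3 - (2948400) * z2 * z3"

lemma QH14_sos: "1000000 * QH14 z0 z1 z2 z3 = 277534458 * (100 * z0 + (-53) * z1 + 18 * z2 + (-195) * z3)^2 + 5717807575 * (20 * z1 + (-2) * z2 + 35 * z3)^2 + 168233186 * (100 * z2 + (-7) * z3)^2 + 7819266750000 * (z3)^2 + 1629304092000 * (z0)^2 + 3267372600 * (z0 - z1)^2 + 8162024400 * (z0 - z2)^2 + 6521931000 * (z0 + z3)^2 + 1636559054876 * (z1)^2 + 2080175932 * (z1 + z2)^2 + 8816074070 * (z1 + z3)^2 + 1616477836946 * (z2)^2 + 17955708030 * (z2 + z3)^2 + 1608634065961 * (z3)^2"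
  unfolding QH14_def by algebra

lemma QH14_nonneg: "0 \<le> QH14 z0 z1 z2 z3"
proof -
  have "0 \<le> 1000000 * QH14 z0 z1 z2 z3"
    unfolding QH14_sos by (intro add_nonneg_nonneg mult_nonneg_nonneg) simp_all
  then show ?thesis by simp
qed

definition QH15 :: "real \<Rightarrow> real \<Rightarrow> real \<Rightarrow> real \<Rightarrow> real" where
  "QH15 z0 z1 z2 z3 = 2751840 * z0^2 + 2751840 * z1^2 + 7469280 * z2^2 + 7469280 * z3^2 + 720720 * z0 * z2 + 982800 * z0 * z3 + 982800 * z1 * z2 + 720720 * z1 * z3 - (982800) * z2 * z3"

lemma QH15_sos: "1000000 * QH15 z0 z1 z2 z3 = 119986419 * (100 * z0 + 30 * z2 + 41 * z3)^2 + 119986419 * (100 * z1 + 41 * z2 + 30 * z3)^2 + 2243129904 * (50 * z2 + (-7) * z3)^2 + 5497498630000 * (z3)^2 + 1551030749100 * (z0)^2 + 400743000 * (z0 + z2)^2 + 544317900 * (z0 - z3)^2 + 1551030749100 * (z1)^2 + 544317900 * (z1 - z2)^2 + 400743000 * (z1 + z3)^2 + 1549354107321 * (z2)^2 + 1471124340 * (z2 - z3)^2 + 1549766872025 * (z3)^2"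
  unfolding QH15_def by algebra

lemma QH15_nonneg: "0 \<le> QH15 z0 z1 z2 z3"
proof -
  have "0 \<le> 1000000 * QH15 z0 z1 z2 z3"
    unfolding QH15_sos by (intro add_nonneg_nonneg mult_nonneg_nonneg) simp_all
  then show ?thesis by simp
qed

lemma id_H:
  fixes a b u v :: real
  shows "4914000 * FA (1 + a) (1 + b) (1 + u) (1 + v) + 11007360 * FB (1 + a) (1 + b) (1 + u) (1 + v) - 2457000 * (a^2 + b^2 + u^2 + v^2) =
    QH0 (v) (u) (u*v) (b) (b*v) (b*u) (b*u*v) (b^2) (b^2*u) (a) (a*v) (a*u) (a*u*v) (a*b) (a^2) (a^2*v) +
    (1 + v) * QH1 (v) (u) (u*v) (b) (b*u) (a) (a*v) (a*u) (a*b) (a^2) +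
    (1 + u) * QH2 (v) (u) (u*v) (b) (b*v) (b*u) (b^2) (a) (a*v) (a*b) +
    (1 + u) * (1 + v) * QH3 (v) (u) (u*v) (b) (b*u) (a) (a*v) (a*b) +
    b * QH4 (v) (u) (u*v) (b) (b*u) (a) (a*v) (a*u) (a*b) (a^2) +
    b * (1 + v) * QH5 (v) (u) (u*v) (b) (b*u) (a) (a*u) +
    b * (1 + u) * QH6 (v) (u) (u*v) (b) (a) (a*v) +
    b * (1 + u) * (1 + v) * QH7 (v) (u) (b) (a) +
    a * QH8 (v) (u) (u*v) (b) (b*v) (b*u) (b^2) (a) (a*v) (a*b) +
    a * (1 + v) * QH9 (v) (u) (u*v) (b) (b*u) (a) +
    a * (1 + u) * QH10 (v) (u) (u*v) (b) (b*v) (a) (a*v) +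
    a * (1 + u) * (1 + v) * QH11 (v) (u) (b) (a) +
    a * b * QH12 (v) (u) (u*v) (b) (b*u) (a) (a*v) +
    a * b * (1 + v) * QH13 (v) (u) (b) (a) +
    a * b * (1 + u) * QH14 (v) (u) (b) (a) +
    a * b * (1 + u) * (1 + v) * QH15 (v) (u) (b) (a)"
  unfolding FA_def FB_def QH0_def QH1_def QH2_def QH3_def QH4_def QH5_def QH6_def QH7_def QH8_def QH9_def QH10_def QH11_def QH12_def QH13_def QH14_def QH15_def by algebra

lemma pos_H:
  fixes a b u v :: real
  assumes hu: "0 \<le> 1 + u" and hv: "0 \<le> 1 + v" and ha: "0 \<le> a" and hb: "0 \<le> b"
  shows "0 \<le> 4914000 * FA (1 + a) (1 + b) (1 + u) (1 + v) + 11007360 * FB (1 + a) (1 + b) (1 + u) (1 + v) - 2457000 * (a^2 + b^2 + u^2 + v^2)"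
  unfolding id_H by (intro hu hv ha hb add_nonneg_nonneg mult_nonneg_nonneg QH0_nonneg QH1_nonneg QH2_nonneg QH3_nonneg QH4_nonneg QH5_nonneg QH6_nonneg QH7_nonneg QH8_nonneg QH9_nonneg QH10_nonneg QH11_nonneg QH12_nonneg QH13_nonneg QH14_nonneg QH15_nonneg)


lemma lo_ineq:
  fixes c d x y :: real
  assumes "c \<ge> 1" "d \<ge> 1" "x > 0" "y > 0"
  shows "0 \<le> FA c d x y + 223/100 * FB c d x y - 1/2 * ((c-1)^2 + (d-1)^2 + (x-1)^2 + (y-1)^2)"
proof -
  have "0 \<le> 4914000 * FA c d x y + 10958220 * FB c d x y - 2457000 * ((c-1)^2 + (d-1)^2 + (x-1)^2 + (y-1)^2)"
    using pos_L[of "x-1" "y-1" "c-1" "d-1"] assms by simp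
  then show ?thesis by simp
qed

lemma hi_ineq:
  fixes c d x y :: real
  assumes "c \<ge> 1" "d \<ge> 1" "x > 0" "y > 0"
  shows "0 \<le> FA c d x y + 56/25 * FB c d x y - 1/2 * ((c-1)^2 + (d-1)^2 + (x-1)^2 + (y-1)^2)"
proof -
  have "0 \<le> 4914000 * FA c d x y + 11007360 * FB c d x y - 2457000 * ((c-1)^2 + (d-1)^2 + (x-1)^2 + (y-1)^2)"
    using pos_H[of "x-1" "y-1" "c-1" "d-1"] assms by simp
  then show ?thesis by simp
qed

lemma sqrt5_bounds: "223/100 < sqrt (5::real)" "sqrt (5::real) < 56/25"
proof -
  show "223/100 < sqrt (5::real)" by (rule real_less_rsqrt) (simp add: power2_eq_square)
  have "sqrt (5::real) < sqrt ((56/25)^2)" by (subst real_sqrt_less_iff) (simp add: power2_eq_square)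
  then show "sqrt (5::real) < 56/25" by simp
qed

theorem theorem4p2:
  fixes c d x y :: real
  assumes "x > 0" and "y > 0" and "c \<ge> 1" and "d \<ge> 1"
  shows "f4 c d x y \<ge> 0 \<and> (f4 c d x y = 0 \<longleftrightarrow> c = 1 \<and> d = 1 \<and> x = 1 \<and> y = 1)"
proof -
  define D where "D = (c-1)^2 + (d-1)^2 + (x-1)^2 + (y-1)^2"
  have D0: "0 \<le> D" unfolding D_def by simp
  have L: "0 \<le> FA c d x y + 223/100 * FB c d x y - 1/2 * D"
    unfolding D_def using lo_ineq assms by simp
  have H: "0 \<le> FA c d x y + 56/25 * FB c d x y - 1/2 * D"
    unfolding D_def using hi_ineq assms by simp
  have eq: "(56/25 - 223/100) * (f4 c d x y - 1/2 * D) =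
      (56/25 - sqrt 5) * (FA c d x y + 223/100 * FB c d x y - 1/2 * D)
    + (sqrt 5 - 223/100) * (FA c d x y + 56/25 * FB c d x y - 1/2 * D)"
    unfolding f4_split by algebra
  have "0 \<le> (56/25 - 223/100) * (f4 c d x y - 1/2 * D)"
    unfolding eq using L H sqrt5_bounds by (intro add_nonneg_nonneg mult_nonneg_nonneg) simp_all
  then have ge: "1/2 * D \<le> f4 c d x y" by simp
  have nn: "f4 c d x y \<ge> 0" using ge D0 by linarith
  have "f4 c d x y = 0 \<longleftrightarrow> c = 1 \<and> d = 1 \<and> x = 1 \<and> y = 1"
  proof
    assume "f4 c d x y = 0"
    then have "D = 0" using ge D0 by linarith
    then show "c = 1 \<and> d = 1 \<and> x = 1 \<and> y = 1" unfolding D_def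
      by (smt (verit) power2_less_eq_zero_iff zero_le_power2)
  next
    assume "c = 1 \<and> d = 1 \<and> x = 1 \<and> y = 1"
    then show "f4 c d x y = 0" unfolding f4_split FA_def FB_def by simp
  qed
  with nn show ?thesis by simp
qed

end
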